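(* Let $U$ be a compact right topological semigroup and let $M$ be a finite almost R-trivial monoid acting on $U$ by continuous endomorphisms. Then there exists a function $g\colon \mathbb{Y}(M)\to E(U)$ such that (i) $g$ is $M$-equivariant; (ii) $g$ is order reversing, i.e. $x\leq_{\mathbb{Y}(M)} y$ implies $g(y)\leq^U g(x)$; (iii) $g$ maps maximal elements of $\mathbb{Y}(M)$ into $I(U)$. Moreover, if $\mathbb{X}(M)$ has at most two elements, then $g$ maps maximal elements of $\mathbb{Y}(M)$ to elements of $E(U)$ that are minimal with respect to $\leq^U$.
   Context: A monoid $M$ acts on $U$ by continuous endomorphisms if there is an action $(a,u)\mapsto a(u)$ of $M$ on $U$, with $1_M$ acting as the identity, such that each map $u\mapsto a(u)$ is a continuous semigroup endomorphism of $U$. A semigroup $U$ with a topology is right topological if for each $u\in U$ the map $x\mapsto xu$ is continuous. $E(U)$ is the set of idempotents of $U$; $u\leq^U v$ means $uv=vu=u$. $I(U)$ denotes the smallest compact two-sided ideal of $U$. Elements $a,b$ of $M$ are R-equivalent if $aM=bM$; $M$ is almost R-trivial if for every $b\in M$ whose R-equivalence class has more than one element, $ab=b$ for all $a\in M$. $\mathbb{X}(M)=\{aM: a\in M\}$ ordered by inclusion, with $M$ acting by $b\cdot aM=baM$. $\mathbb{Y}(M)$ is the set of non-empty subsets of $\mathbb{X}(M)$ that are linearly ordered by inclusion, ordered by: $x\leq_{\mathbb{Y}(M)} y$ iff $x\subseteq y$ and every element of $x$ is strictly included in every element of $y\setminus x$; $M$ acts on $\mathbb{Y}(M)$ by $a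 x=\{a\cdot i : i\in x\}$. *)

theory Defs
  imports "HOL-Analysis.Analysis"
begin

definition semigroup_on :: "'u set \<Rightarrow> ('u \<Rightarrow> 'u \<Rightarrow> 'u) \<Rightarrow> bool" where
  "semigroup_on U mul \<longleftrightarrow>
     (\<forall>x\<in>U. \<forall>y\<in>U. mul x y \<in> U) \<and>
     (\<forall>x\<in>U. \<forall>y\<in>U. \<forall>z\<in>U. mul (mul x y) z = mul x (mul y z))"

definition compact_right_topological_semigroup ::
  "'u topology \<Rightarrow> ('u \<Rightarrow> 'u \<Rightarrow> 'u) \<Rightarrow> bool" where
  "compact_right_topological_semigroup T mul \<longleftrightarrow>
     semigroup_on (topspace T) mul \<and>
     topspace T \<noteq> {} \<and>
     compact_space T \<and> Hausdorff_space T \<and>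
     (\<forall>u\<in>topspace T. continuous_map T T (\<lambda>x. mul x u))"

definition idempotents :: "'u set \<Rightarrow> ('u \<Rightarrow> 'u \<Rightarrow> 'u) \<Rightarrow> 'u set" where
  "idempotents U mul = {e \<in> U. mul e e = e}"

definition idem_le :: "('u \<Rightarrow> 'u \<Rightarrow> 'u) \<Rightarrow> 'u \<Rightarrow> 'u \<Rightarrow> bool" where
  "idem_le mul u v \<longleftrightarrow> mul u v = u \<and> mul v u = u"

definition two_sided_ideal :: "'u set \<Rightarrow> ('u \<Rightarrow> 'u \<Rightarrow> 'u) \<Rightarrow> 'u set \<Rightarrow> bool" where
  "two_sided_ideal U mul I \<longleftrightarrow> I \<noteq> {} \<and> I \<subseteq> U \<and>
     (\<forall>u\<in>U. \<forall>i\<in>I. mul u i \<in> I \<and> mul i u \<in> I)"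

definition smallest_compact_ideal :: "'u topology \<Rightarrow> ('u \<Rightarrow> 'u \<Rightarrow> 'u) \<Rightarrow> 'u set" where
  "smallest_compact_ideal T mul =
     (THE I. two_sided_ideal (topspace T) mul I \<and> compactin T I \<and>
        (\<forall>J. two_sided_ideal (topspace T) mul J \<and> compactin T J \<longrightarrow> I \<subseteq> J))"

definition acts_by_continuous_endomorphisms ::
  "'u topology \<Rightarrow> ('u \<Rightarrow> 'u \<Rightarrow> 'u) \<Rightarrow> ('m::monoid_mult \<Rightarrow> 'u \<Rightarrow> 'u) \<Rightarrow> bool" where
  "acts_by_continuous_endomorphisms T mul act \<longleftrightarrow>
     (\<forall>u\<in>topspace T. act 1 u = u) \<and>
     (\<forall>a b. \<forall>u\<in>topspace T. act (a * b) u = act a (act b u)) \<and>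
     (\<forall>a. continuous_map T T (act a)) \<and>
     (\<forall>a. \<forall>u\<in>topspace T. \<forall>v\<in>topspace T. act a (mul u v) = mul (act a u) (act a v))"

definition R_equiv :: "'m::monoid_mult \<Rightarrow> 'm \<Rightarrow> bool" where
  "R_equiv a b \<longleftrightarrow> range ((*) a) = range ((*) b)"

definition almost_R_trivial :: "'m::monoid_mult itself \<Rightarrow> bool" where
  "almost_R_trivial _ \<longleftrightarrow>
     (\<forall>b::'m. (\<exists>c. c \<noteq> b \<and> R_equiv c b) \<longrightarrow> (\<forall>a. a * b = b))"

definition XX :: "'m::monoid_mult set set" where
  "XX = {range ((*) a) | a. True}"

definition X_act :: "'m::monoid_mult \<Rightarrow> 'm set \<Rightarrow> 'm set" where
  "X_act b i = (*) b ` i"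

definition YY :: "'m::monoid_mult set set set" where
  "YY = {x. x \<noteq> {} \<and> x \<subseteq> XX \<and> (\<forall>i\<in>x. \<forall>j\<in>x. i \<subseteq> j \<or> j \<subseteq> i)}"

definition Y_le :: "'m::monoid_mult set set \<Rightarrow> 'm set set \<Rightarrow> bool" where
  "Y_le x y \<longleftrightarrow> x \<subseteq> y \<and> (\<forall>i\<in>x. \<forall>j\<in>y - x. i \<subset> j)"

definition Y_act :: "'m::monoid_mult \<Rightarrow> 'm set set \<Rightarrow> 'm set set" where
  "Y_act a x = {X_act a i | i. i \<in> x}"

definition Y_maximal :: "'m::monoid_mult set set \<Rightarrow> bool" where
  "Y_maximal y \<longleftrightarrow> y \<in> YY \<and> (\<forall>z\<in>YY. Y_le y z \<longrightarrow> z = y)"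

end

theory Submission
  imports Defs
begin

lemma chain_compact_Inter_nonempty:
  assumes H: "Hausdorff_space X" and C: "C \<noteq> {}"
    and P: "\<And>A. A \<in> C \<Longrightarrow> compactin X A \<and> A \<noteq> {}"
    and ch: "\<And>A B. A \<in> C \<Longrightarrow> B \<in> C \<Longrightarrow> A \<subseteq> B \<or> B \<subseteq> A"
  shows "\<Inter>C \<noteq> {}"
proof -
  obtain A0 where A0: "A0 \<in> C" using C by blast
  have cA0: "compactin X A0" using P A0 by blast
  have cl: "\<forall>B\<in>C. closedin X B" using P H compactin_imp_closedin by metis
  have fin: "\<forall>F. finite F \<and> F \<subseteq> C \<longrightarrow> A0 \<inter> \<Inter>F \<noteq> {}"
  proof (intro allI impI)
    fix F assume F: "finite F \<and> F \<subseteq> C"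
    have sc: "subset.chain UNIV (insert A0 F)"
      unfolding subset_chain_def
    proof (intro conjI ballI)
      fix x y assume "x \<in> insert A0 F" "y \<in> insert A0 F"
      then have "x \<in> C" "y \<in> C" using F A0 by auto
      then show "x \<subseteq> y \<or> y \<subseteq> x" by (rule ch)
    qed simp
    have "\<Inter>(insert A0 F) \<in> insert A0 F"
      by (rule Inter_in_chain[OF _ _ sc]) (use F in simp_all)
    then have "\<Inter>(insert A0 F) \<in> C" using F A0 by auto
    then have "\<Inter>(insert A0 F) \<noteq> {}" using P by blast
    then show "A0 \<inter> \<Inter>F \<noteq> {}" by simp
  qed
  have fip: "\<forall>\<U>. (\<forall>C\<in>\<U>. closedin X C) \<and> (\<forall>F. finite F \<and> F \<subseteq> \<U> \<longrightarrow> A0 \<inter> \<Inter>F \<noteq> {}) \<longrightarrow> A0 \<inter> \<Inter>\<U> \<noteq> {}"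
    using cA0[unfolded compactin_fip] by (rule conjunct2)
  have "A0 \<inter> \<Inter>C \<noteq> {}"
    using fip[rule_format, of C] cl fin by simp
  then show ?thesis by blast
qed

lemma compact_zorn_min:
  assumes H: "Hausdorff_space X"
    and P0: "P A0"
    and PC: "\<And>A. P A \<Longrightarrow> compactin X A \<and> A \<noteq> {}"
    and Pch: "\<And>C. C \<noteq> {} \<Longrightarrow> (\<forall>A\<in>C. P A) \<Longrightarrow> (\<forall>A\<in>C. \<forall>B\<in>C. A \<subseteq> B \<or> B \<subseteq> A)
                 \<Longrightarrow> \<Inter>C \<noteq> {} \<Longrightarrow> P (\<Inter>C)"
  shows "\<exists>A. P A \<and> A \<subseteq> A0 \<and> (\<forall>B. P B \<longrightarrow> B \<subseteq> A \<longrightarrow> B = A)"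
proof -
  define \<A> where "\<A> = uminus ` {A. P A \<and> A \<subseteq> A0}"
  have "\<exists>M\<in>\<A>. \<forall>X\<in>\<A>. M \<subseteq> X \<longrightarrow> X = M"
  proof (rule subset_Zorn_nonempty)
    show "\<A> \<noteq> {}" unfolding \<A>_def using P0 by blast
  next
    fix \<C> assume ne: "\<C> \<noteq> {}" and sc: "subset.chain \<A> \<C>"
    define C where "C = uminus ` \<C>"
    have sub: "\<C> \<subseteq> \<A>" and tot: "\<forall>X\<in>\<C>. \<forall>Y\<in>\<C>. X \<subseteq> Y \<or> Y \<subseteq> X"
      using sc unfolding subset_chain_def by auto
    have CP: "\<forall>A\<in>C. P A \<and> A \<subseteq> A0"
    proof
      fix A assume "A \<in> C"
      then obtain B where "B \<in> \<C>" "A = - B" unfolding C_def by blast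
      then obtain A' where "A' \<in> {A. P A \<and> A \<subseteq> A0}" "B = - A'" using sub unfolding \<A>_def by blast
      then show "P A \<and> A \<subseteq> A0" using \<open>A = - B\<close> by simp
    qed
    have Cne: "C \<noteq> {}" using ne unfolding C_def by blast
    have Cch: "\<forall>A\<in>C. \<forall>B\<in>C. A \<subseteq> B \<or> B \<subseteq> A"
    proof (intro ballI)
      fix A B assume "A \<in> C" "B \<in> C"
      then obtain A' B' where "A' \<in> \<C>" "B' \<in> \<C>" "A = - A'" "B = - B'" unfolding C_def by blast
      then show "A \<subseteq> B \<or> B \<subseteq> A" using tot by blast
    qed
    have "\<Inter>C \<noteq> {}"
      by (rule chain_compact_Inter_nonempty[OF H Cne]) (use CP PC Cch in blast)+
    then have "P (\<Inter>C)" using Pch Cne CP Cch by blast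
    moreover have "\<Inter>C \<subseteq> A0" using CP Cne by blast
    moreover have "\<Union>\<C> = - \<Inter>C" unfolding C_def by auto
    ultimately show "\<Union>\<C> \<in> \<A>" unfolding \<A>_def by blast
  qed
  then obtain M where M: "M \<in> \<A>" and Mmax: "\<forall>X\<in>\<A>. M \<subseteq> X \<longrightarrow> X = M" by blast
  obtain A where A: "M = - A" "P A" "A \<subseteq> A0" using M unfolding \<A>_def by blast
  have "\<forall>B. P B \<longrightarrow> B \<subseteq> A \<longrightarrow> B = A"
  proof (intro allI impI)
    fix B assume "P B" "B \<subseteq> A"
    then have "- B \<in> \<A>" "M \<subseteq> - B" using A unfolding \<A>_def by auto
    then show "B = A" using Mmax A by auto
  qed
  then show ?thesis using A by blast
qed

lemma ellis:
  assumes H: "Hausdorff_space X" and Sc: "compactin X S" and Sne: "S \<noteq> {}"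
    and cl: "\<And>x y. x \<in> S \<Longrightarrow> y \<in> S \<Longrightarrow> mul x y \<in> S"
    and assoc: "\<And>x y z. x \<in> S \<Longrightarrow> y \<in> S \<Longrightarrow> z \<in> S \<Longrightarrow> mul (mul x y) z = mul x (mul y z)"
    and cont: "\<And>s. s \<in> S \<Longrightarrow> continuous_map X X (\<lambda>x. mul x s)"
  shows "\<exists>e\<in>S. mul e e = e"
proof -
  define P where "P A \<longleftrightarrow> A \<subseteq> S \<and> compactin X A \<and> A \<noteq> {} \<and> (\<forall>x\<in>A. \<forall>y\<in>A. mul x y \<in> A)" for A
  have "\<exists>A. P A \<and> A \<subseteq> S \<and> (\<forall>B. P B \<longrightarrow> B \<subseteq> A \<longrightarrow> B = A)"
  proof (rule compact_zorn_min[OF H])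
    show "P S" unfolding P_def using Sc Sne cl by blast
  next
    fix A assume "P A" then show "compactin X A \<and> A \<noteq> {}" unfolding P_def by blast
  next
    fix C assume C: "C \<noteq> {}" "\<forall>A\<in>C. P A" "\<forall>A\<in>C. \<forall>B\<in>C. A \<subseteq> B \<or> B \<subseteq> A" "\<Inter>C \<noteq> {}"
    obtain K where K: "K \<in> C" using C by blast
    have "compactin X (\<Inter>C)"
      by (rule closed_compactin_Inter[OF _ K]) (use C K in \<open>auto simp: P_def intro!: compactin_imp_closedin[OF H]\<close>)
    then show "P (\<Inter>C)" using C K unfolding P_def by blast
  qed
  then obtain A where PA: "P A" and Amin: "\<forall>B. P B \<longrightarrow> B \<subseteq> A \<longrightarrow> B = A" by blast
  have AS: "A \<subseteq> S" and cA: "compactin X A" and Ane: "A \<noteq> {}" and Acl: "\<forall>x\<in>A. \<forall>y\<in>A. mul x y \<in> A"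
    using PA unfolding P_def by auto
  obtain a where a: "a \<in> A" using Ane by blast
  have aS: "a \<in> S" using a AS by blast
  have Atop: "A \<subseteq> topspace X" using cA compactin_subset_topspace by blast
  define B where "B = (\<lambda>x. mul x a) ` A"
  have "P B"
    unfolding P_def
  proof (intro conjI ballI)
    show "B \<subseteq> S" unfolding B_def using Acl a AS by blast
    show "compactin X B" unfolding B_def by (rule image_compactin[OF cA cont[OF aS]])
    show "B \<noteq> {}" unfolding B_def using Ane by blast
  next
    fix u v assume "u \<in> B" "v \<in> B"
    then obtain x y where xy: "x \<in> A" "y \<in> A" "u = mul x a" "v = mul y a" unfolding B_def by blast
    have "mul u v = mul (mul u y) a" using assoc xy AS a Acl by (metis subsetD)
    moreover have "mul u y \<in> A" using Acl xy a by blast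
    ultimately show "mul u v \<in> B" unfolding B_def by blast
  qed
  moreover have "B \<subseteq> A" unfolding B_def using Acl a by blast
  ultimately have "B = A" using Amin by blast
  then obtain x0 where x0: "x0 \<in> A" "mul x0 a = a" using a unfolding B_def by (metis imageE)
  define D where "D = {x \<in> topspace X. mul x a = a} \<inter> A"
  have "P D"
    unfolding P_def
  proof (intro conjI ballI)
    show "D \<subseteq> S" unfolding D_def using AS by blast
    have "closedin X {x \<in> topspace X. mul x a = a}"
      by (rule closedin_continuous_maps_eq[OF H cont[OF aS]]) (use a Atop in auto)
    then show "compactin X D" unfolding D_def by (rule closed_Int_compactin[OF _ cA])
    show "D \<noteq> {}" unfolding D_def using x0 Atop by blast
  next
    fix u v assume "u \<in> D" "v \<in> D"
    then have uv: "u \<in> A" "v \<in> A" "mul u a = a" "mul v a = a" unfolding D_def by auto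
    have "mul (mul u v) a = mul u (mul v a)" using assoc uv a AS by blast
    then have "mul (mul u v) a = a" using uv by simp
    moreover have "mul u v \<in> A" using Acl uv by blast
    ultimately show "mul u v \<in> D" unfolding D_def using Atop by blast
  qed
  moreover have "D \<subseteq> A" unfolding D_def by blast
  ultimately have "D = A" using Amin by blast
  then have "mul a a = a" using a unfolding D_def by blast
  then show ?thesis using aS by blast
qed

lemma min_left_ideal:
  assumes H: "Hausdorff_space X" and Sc: "compactin X S"
    and cl: "\<And>x y. x \<in> S \<Longrightarrow> y \<in> S \<Longrightarrow> mul x y \<in> S"
    and assoc: "\<And>x y z. x \<in> S \<Longrightarrow> y \<in> S \<Longrightarrow> z \<in> S \<Longrightarrow> mul (mul x y) z = mul x (mul y z)"
    and cont: "\<And>s. s \<in> S \<Longrightarrow> continuous_map X X (\<lambda>x. mul x s)"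
    and J0: "J0 \<subseteq> S" "compactin X J0" "J0 \<noteq> {}" "\<And>s j. s \<in> S \<Longrightarrow> j \<in> J0 \<Longrightarrow> mul s j \<in> J0"
  shows "\<exists>L. L \<subseteq> J0 \<and> L \<noteq> {} \<and> compactin X L \<and> (\<forall>s\<in>S. \<forall>l\<in>L. mul s l \<in> L)
            \<and> (\<forall>l\<in>L. (\<lambda>s. mul s l) ` S = L)"
proof -
  define P where "P A \<longleftrightarrow> A \<subseteq> S \<and> compactin X A \<and> A \<noteq> {} \<and> (\<forall>s\<in>S. \<forall>y\<in>A. mul s y \<in> A)" for A
  have "\<exists>A. P A \<and> A \<subseteq> J0 \<and> (\<forall>B. P B \<longrightarrow> B \<subseteq> A \<longrightarrow> B = A)"
  proof (rule compact_zorn_min[OF H])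
    show "P J0" unfolding P_def using J0 by blast
  next
    fix A assume "P A" then show "compactin X A \<and> A \<noteq> {}" unfolding P_def by blast
  next
    fix C assume C: "C \<noteq> {}" "\<forall>A\<in>C. P A" "\<forall>A\<in>C. \<forall>B\<in>C. A \<subseteq> B \<or> B \<subseteq> A" "\<Inter>C \<noteq> {}"
    obtain K where K: "K \<in> C" using C by blast
    have "compactin X (\<Inter>C)"
      by (rule closed_compactin_Inter[OF _ K]) (use C K in \<open>auto simp: P_def intro!: compactin_imp_closedin[OF H]\<close>)
    then show "P (\<Inter>C)" using C K unfolding P_def by blast
  qed
  then obtain A where PA: "P A" and AJ: "A \<subseteq> J0" and Amin: "\<forall>B. P B \<longrightarrow> B \<subseteq> A \<longrightarrow> B = A" by blast
  have AS: "A \<subseteq> S" and cA: "compactin X A" and Ane: "A \<noteq> {}" and Acl: "\<forall>s\<in>S. \<forall>y\<in>A. mul s y \<in> A"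
    using PA unfolding P_def by auto
  have "\<forall>l\<in>A. (\<lambda>s. mul s l) ` S = A"
  proof
    fix l assume l: "l \<in> A"
    have lS: "l \<in> S" using l AS by blast
    define B where "B = (\<lambda>s. mul s l) ` S"
    have "P B"
      unfolding P_def
    proof (intro conjI ballI)
      show "B \<subseteq> S" unfolding B_def using cl lS by blast
      show "compactin X B" unfolding B_def by (rule image_compactin[OF Sc cont[OF lS]])
      show "B \<noteq> {}" unfolding B_def using lS by blast
    next
      fix s y assume "s \<in> S" "y \<in> B"
      then obtain t where t: "t \<in> S" "y = mul t l" unfolding B_def by blast
      have "mul s y = mul (mul s t) l" using assoc t \<open>s \<in> S\<close> lS by simp
      then show "mul s y \<in> B" unfolding B_def using cl t \<open>s \<in> S\<close> by blast
    qed
    moreover have "B \<subseteq> A" unfolding B_def using Acl l by blast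
    ultimately show "(\<lambda>s. mul s l) ` S = A" using Amin unfolding B_def by blast
  qed
  then show ?thesis using AJ Ane cA Acl by blast
qed

definition topY :: "'m::monoid_mult set set \<Rightarrow> 'm set" where
  "topY y = (THE i. i \<in> y \<and> (\<forall>j\<in>y. j \<subseteq> i))"

definition parY :: "'m::monoid_mult set set \<Rightarrow> 'm set set" where
  "parY y = y - {topY y}"

lemma X_act_range: "X_act c (range ((*) a)) = range ((*) (c * a :: 'm::monoid_mult))"
  unfolding X_act_def by (auto simp: image_image mult.assoc)

lemma Y_act_eq: "Y_act a x = X_act a ` x"
  unfolding Y_act_def by auto

lemma XX_finite: "finite (XX :: 'm::{monoid_mult,finite} set set)"
proof -
  have "XX = (\<lambda>a::'m. range ((*) a)) ` UNIV" unfolding XX_def by auto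
  then show ?thesis by simp
qed

lemma YY_sub: "y \<in> YY \<Longrightarrow> y \<subseteq> XX" unfolding YY_def by blast

lemma YY_finite_elem: "(y :: 'm::{monoid_mult,finite} set set) \<in> YY \<Longrightarrow> finite y"
  using YY_sub XX_finite finite_subset by blast

lemma YY_finite: "finite (YY :: 'm::{monoid_mult,finite} set set set)"
proof -
  have "YY \<subseteq> Pow (XX :: 'm set set)" using YY_sub by blast
  then show ?thesis using XX_finite finite_subset by blast
qed

lemma YY_ne: "y \<in> YY \<Longrightarrow> y \<noteq> {}" unfolding YY_def by blast

lemma YY_chain: "y \<in> YY \<Longrightarrow> i \<in> y \<Longrightarrow> j \<in> y \<Longrightarrow> i \<subseteq> j \<or> j \<subseteq> i" unfolding YY_def by blast

lemma topY_ex: assumes y: "(y :: 'm::{monoid_mult,finite} set set) \<in> YY"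
  shows "\<exists>i. i \<in> y \<and> (\<forall>j\<in>y. j \<subseteq> i)"
proof -
  obtain m where m: "m \<in> y" "\<forall>b\<in>y. m \<le> b \<longrightarrow> m = b"
    using finite_has_maximal[OF YY_finite_elem[OF y] YY_ne[OF y]] by blast
  have "\<forall>j\<in>y. j \<subseteq> m"
  proof
    fix j assume "j \<in> y"
    then have "j \<subseteq> m \<or> m \<subseteq> j" using YY_chain[OF y m(1)] by blast
    then show "j \<subseteq> m" using m \<open>j \<in> y\<close> by auto
  qed
  then show ?thesis using m by blast
qed

lemma topY_eq: assumes "i \<in> y" "\<forall>j\<in>y. j \<subseteq> i" shows "topY y = i"
  unfolding topY_def
proof (rule the_equality)
  show "i \<in> y \<and> (\<forall>j\<in>y. j \<subseteq> i)" using assms by blast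
  fix k assume "k \<in> y \<and> (\<forall>j\<in>y. j \<subseteq> k)"
  then show "k = i" using assms by blast
qed

lemma topY: assumes "(y :: 'm::{monoid_mult,finite} set set) \<in> YY"
  shows "topY y \<in> y" "\<And>j. j \<in> y \<Longrightarrow> j \<subseteq> topY y"
  using topY_ex[OF assms] topY_eq by metis+

lemma card_YY: "(y :: 'm::{monoid_mult,finite} set set) \<in> YY \<Longrightarrow> 1 \<le> card y"
  using YY_finite_elem YY_ne by (simp add: Suc_le_eq card_gt_0_iff)

lemma parY_props: assumes y: "(y :: 'm::{monoid_mult,finite} set set) \<in> YY" and c: "2 \<le> card y"
  shows "parY y \<in> YY" "card (parY y) = card y - 1" "card (parY y) < card y"
proof -
  have fy: "finite y" using YY_finite_elem[OF y] .
  have ct: "card (parY y) = card y - 1" unfolding parY_def using topY(1)[OF y] fy by simp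
  then have "parY y \<noteq> {}" using c fy by (metis One_nat_def card.empty diff_is_0_eq not_less_eq_eq numeral_2_eq_2)
  then show "parY y \<in> YY" using y unfolding YY_def parY_def by blast
  show "card (parY y) = card y - 1" by (rule ct)
  show "card (parY y) < card y" using ct c by simp
qed

lemma Y_act_YY: assumes y: "y \<in> YY" shows "Y_act c y \<in> YY"
proof -
  have "Y_act c y \<subseteq> XX"
  proof
    fix k assume "k \<in> Y_act c y"
    then obtain i where "i \<in> y" "k = X_act c i" unfolding Y_act_eq by blast
    then obtain a where "i = range ((*) a)" using YY_sub[OF y] unfolding XX_def by blast
    then have "k = range ((*) (c * a))" using \<open>k = X_act c i\<close> X_act_range by simp
    then show "k \<in> XX" unfolding XX_def by blast
  qed
  moreover have "Y_act c y \<noteq> {}" using YY_ne[OF y] unfolding Y_act_eq by blast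
  moreover have "\<forall>i\<in>Y_act c y. \<forall>j\<in>Y_act c y. i \<subseteq> j \<or> j \<subseteq> i"
  proof (intro ballI)
    fix i j assume "i \<in> Y_act c y" "j \<in> Y_act c y"
    then obtain i' j' where "i' \<in> y" "j' \<in> y" "i = X_act c i'" "j = X_act c j'" unfolding Y_act_eq by blast
    then show "i \<subseteq> j \<or> j \<subseteq> i" using YY_chain[OF y, of i' j'] unfolding X_act_def by (metis image_mono)
  qed
  ultimately show ?thesis unfolding YY_def by blast
qed

lemma topY_act: assumes y: "(y :: 'm::{monoid_mult,finite} set set) \<in> YY"
  shows "topY (Y_act c y) = X_act c (topY y)"
proof (rule topY_eq)
  show "X_act c (topY y) \<in> Y_act c y" unfolding Y_act_eq using topY(1)[OF y] by blast
  show "\<forall>j\<in>Y_act c y. j \<subseteq> X_act c (topY y)"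
  proof
    fix j assume "j \<in> Y_act c y"
    then obtain j' where "j' \<in> y" "j = X_act c j'" unfolding Y_act_eq by blast
    then show "j \<subseteq> X_act c (topY y)" using topY(2)[OF y, of j'] unfolding X_act_def by (metis image_mono)
  qed
qed

lemma par_act: assumes y: "(y :: 'm::{monoid_mult,finite} set set) \<in> YY" and c: "2 \<le> card y"
  shows "Y_act a (parY y) = Y_act a y \<or>
         (2 \<le> card (Y_act a y) \<and> Y_act a (parY y) = parY (Y_act a y))"
proof -
  have yins: "y = insert (topY y) (parY y)" unfolding parY_def using topY(1)[OF y] by blast
  have ins: "Y_act a y = insert (X_act a (topY y)) (Y_act a (parY y))"
    unfolding Y_act_eq by (subst yins) (rule image_insert)
  show ?thesis
  proof (cases "X_act a (topY y) \<in> Y_act a (parY y)")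
    case True
    then have "Y_act a y = Y_act a (parY y)" using ins by (simp add: insert_absorb)
    then show ?thesis by simp
  next
    case False
    have pY: "parY y \<in> YY" using parY_props[OF y c] by blast
    have "parY (Y_act a y) = Y_act a y - {X_act a (topY y)}"
      unfolding parY_def using topY_act[OF y] by simp
    also have "\<dots> = Y_act a (parY y)" using ins False by simp
    finally have e: "Y_act a (parY y) = parY (Y_act a y)" by simp
    have f: "finite (Y_act a (parY y))" using YY_finite_elem[OF Y_act_YY[OF pY]] .
    have ne: "Y_act a (parY y) \<noteq> {}" using YY_ne[OF Y_act_YY[OF pY]] .
    have "card (Y_act a y) = Suc (card (Y_act a (parY y)))" using ins False f by simp
    moreover have "card (Y_act a (parY y)) \<ge> 1" using f ne by (simp add: Suc_le_eq card_gt_0_iff)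
    ultimately have "2 \<le> card (Y_act a y)" by simp
    then show ?thesis using e by blast
  qed
qed

lemma card_act_le: assumes y: "(y :: 'm::{monoid_mult,finite} set set) \<in> YY"
  shows "card (Y_act a y) \<le> card y"
  unfolding Y_act_eq using card_image_le YY_finite_elem[OF y] by blast

lemma Y_le_parY: assumes y: "(y :: 'm::{monoid_mult,finite} set set) \<in> YY" and c: "2 \<le> card y"
  shows "Y_le (parY y) y"
  unfolding Y_le_def parY_def
proof (intro conjI ballI)
  fix i j assume i: "i \<in> y - {topY y}" and j: "j \<in> y - (y - {topY y})"
  then have "j = topY y" by blast
  then show "i \<subset> j" using i topY(2)[OF y] by blast
next
  show "y - {topY y} \<subseteq> y" by (rule Diff_subset)
qed

lemma Y_le_trans: assumes "Y_le x y" "Y_le y z" shows "Y_le x z"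
proof -
  have a: "x \<subseteq> y" "\<forall>i\<in>x. \<forall>j\<in>y - x. i \<subset> j" using assms(1) unfolding Y_le_def by auto
  have b: "y \<subseteq> z" "\<forall>i\<in>y. \<forall>j\<in>z - y. i \<subset> j" using assms(2) unfolding Y_le_def by auto
  have "\<forall>i\<in>x. \<forall>j\<in>z - x. i \<subset> j"
  proof (intro ballI)
    fix i j assume i: "i \<in> x" and j: "j \<in> z - x"
    show "i \<subset> j"
    proof (cases "j \<in> y")
      case True then show ?thesis using a i j by blast
    next
      case False then have "j \<in> z - y" using j by blast
      moreover have "i \<in> y" using a i by blast
      ultimately show ?thesis using b by blast
    qed
  qed
  then show ?thesis unfolding Y_le_def using a b by blast
qed

lemma Y_le_par: assumes x: "(x :: 'm::{monoid_mult,finite} set set) \<in> YY" and y: "y \<in> YY"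
    and le: "Y_le x y" and ne: "x \<noteq> y"
  shows "2 \<le> card y \<and> Y_le x (parY y)"
proof -
  have xy: "x \<subseteq> y" and st: "\<forall>i\<in>x. \<forall>j\<in>y - x. i \<subset> j" using le unfolding Y_le_def by auto
  obtain j where j: "j \<in> y" "j \<notin> x" using xy ne by blast
  have "topY y \<notin> x"
  proof
    assume "topY y \<in> x"
    then have "topY y \<subset> j" using st j by blast
    moreover have "j \<subseteq> topY y" using topY(2)[OF y j(1)] .
    ultimately show False by blast
  qed
  then have xp: "x \<subseteq> parY y" unfolding parY_def using xy by blast
  have fy: "finite y" using YY_finite_elem[OF y] .
  have "parY y \<noteq> {}" using xp YY_ne[OF x] by blast
  then have "card (parY y) \<ge> 1" using fy unfolding parY_def by (simp add: Suc_le_eq card_gt_0_iff)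
  moreover have "card (parY y) = card y - 1" unfolding parY_def using topY(1)[OF y] fy by simp
  ultimately have "2 \<le> card y" by simp
  moreover have "Y_le x (parY y)" unfolding Y_le_def using xp st unfolding parY_def by blast
  ultimately show ?thesis by blast
qed

lemma UNIV_XX: "(UNIV :: 'm::monoid_mult set) \<in> XX"
proof -
  have "range ((*) (1::'m)) = UNIV" by simp
  then show ?thesis unfolding XX_def by blast
qed

lemma max_UNIV: assumes "Y_maximal (y :: 'm::{monoid_mult,finite} set set)" shows "UNIV \<in> y"
proof (rule ccontr)
  assume nu: "UNIV \<notin> y"
  have y: "y \<in> YY" using assms unfolding Y_maximal_def by blast
  define z where "z = insert UNIV y"
  have "z \<in> YY"
    unfolding YY_def
  proof (intro CollectI conjI ballI)
    show "z \<noteq> {}" unfolding z_def by blast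
    show "z \<subseteq> XX" unfolding z_def using UNIV_XX YY_sub[OF y] by blast
  next
    fix i j assume "i \<in> z" "j \<in> z"
    then show "i \<subseteq> j \<or> j \<subseteq> i" unfolding z_def using YY_chain[OF y] by blast
  qed
  moreover have "Y_le y z"
    unfolding Y_le_def
  proof (intro conjI ballI)
    show "y \<subseteq> z" unfolding z_def by blast
    fix i j assume "i \<in> y" "j \<in> z - y"
    then show "i \<subset> j" unfolding z_def using nu by blast
  qed
  ultimately have "z = y" using assms unfolding Y_maximal_def by blast
  then show False using nu unfolding z_def by blast
qed

lemma topY_UNIV: "(y :: 'm::{monoid_mult,finite} set set) \<in> YY \<Longrightarrow> UNIV \<in> y \<Longrightarrow> topY y = UNIV"
  by (rule topY_eq) auto

definition rz :: "'m::monoid_mult \<Rightarrow> bool" where "rz z \<longleftrightarrow> (\<forall>a. a * z = z)"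

locale crts_act =
  fixes T :: "'u topology" and mul :: "'u \<Rightarrow> 'u \<Rightarrow> 'u"
    and act :: "'m::{monoid_mult, finite} \<Rightarrow> 'u \<Rightarrow> 'u"
  assumes crts: "compact_right_topological_semigroup T mul"
    and art: "almost_R_trivial TYPE('m)"
    and acts: "acts_by_continuous_endomorphisms T mul act"
begin

abbreviation "U \<equiv> topspace T"

lemma U_mul: "x \<in> U \<Longrightarrow> y \<in> U \<Longrightarrow> mul x y \<in> U"
  using crts unfolding compact_right_topological_semigroup_def semigroup_on_def by blast
lemma U_assoc: "x \<in> U \<Longrightarrow> y \<in> U \<Longrightarrow> z \<in> U \<Longrightarrow> mul (mul x y) z = mul x (mul y z)"
  using crts unfolding compact_right_topological_semigroup_def semigroup_on_def by blast
lemma U_ne: "U \<noteq> {}"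
  using crts unfolding compact_right_topological_semigroup_def by blast
lemma cpt: "compact_space T"
  using crts unfolding compact_right_topological_semigroup_def by blast
lemma H: "Hausdorff_space T"
  using crts unfolding compact_right_topological_semigroup_def by blast
lemma rcont: "u \<in> U \<Longrightarrow> continuous_map T T (\<lambda>x. mul x u)"
  using crts unfolding compact_right_topological_semigroup_def by blast
lemma U_cpt: "compactin T U" using cpt unfolding compact_space_def .

lemma act1: "u \<in> U \<Longrightarrow> act 1 u = u"
  using acts unfolding acts_by_continuous_endomorphisms_def by blast
lemma act_mult: "u \<in> U \<Longrightarrow> act (a * b) u = act a (act b u)"
  using acts unfolding acts_by_continuous_endomorphisms_def by blast
lemma act_cont: "continuous_map T T (act a)"
  using acts unfolding acts_by_continuous_endomorphisms_def by blast
lemma act_hom: "u \<in> U \<Longrightarrow> v \<in> U \<Longrightarrow> act a (mul u v) = mul (act a u) (act a v)"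
  using acts unfolding acts_by_continuous_endomorphisms_def by blast
lemma act_U: "u \<in> U \<Longrightarrow> act a u \<in> U"
  using act_cont continuous_map_image_subset_topspace by blast

lemma act_idem: "u \<in> U \<Longrightarrow> mul u u = u \<Longrightarrow> mul (act a u) (act a u) = act a u"
  using act_hom by metis

lemma act_le: "u \<in> U \<Longrightarrow> v \<in> U \<Longrightarrow> idem_le mul u v \<Longrightarrow> idem_le mul (act a u) (act a v)"
  unfolding idem_le_def using act_hom by metis

end

context crts_act begin

lemma p_exists:
  "\<exists>p\<in>U. mul p p = p \<and> (\<forall>z::'m. rz z \<longrightarrow> act z p = p) \<and>
     (\<forall>(z::'m) e. rz z \<longrightarrow> e \<in> U \<longrightarrow> mul e e = e \<longrightarrow> mul e p = e \<longrightarrow> mul p (act z e) = p)"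
proof (cases "\<exists>z0::'m. rz z0")
  case False
  then have nz: "\<And>z::'m. \<not> rz z" by blast
  obtain p where "p \<in> U" "mul p p = p"
    using ellis[OF H U_cpt U_ne U_mul U_assoc rcont] by blast
  then show ?thesis by (intro bexI[of _ p] conjI allI impI) (use nz in blast)+
next
  case True
  then obtain z0 :: 'm where z0: "rz z0" by blast
  define F where "F = act z0 ` U"
  have FU: "F \<subseteq> U" unfolding F_def using act_U by blast
  have Fc: "compactin T F" unfolding F_def by (rule image_compactin[OF U_cpt act_cont])
  have Fne: "F \<noteq> {}" unfolding F_def using U_ne by blast
  have Fmul: "mul x y \<in> F" if xy: "x \<in> F" "y \<in> F" for x y
  proof -
    obtain u v where "u \<in> U" "v \<in> U" "x = act z0 u" "y = act z0 v" using xy unfolding F_def by blast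
    then have "mul x y = act z0 (mul u v)" using act_hom by simp
    then show ?thesis unfolding F_def using U_mul \<open>u \<in> U\<close> \<open>v \<in> U\<close> by blast
  qed
  have Fassoc: "mul (mul x y) z = mul x (mul y z)" if "x \<in> F" "y \<in> F" "z \<in> F" for x y z
    using U_assoc that FU by (meson subsetD)
  have Fcont: "continuous_map T T (\<lambda>x. mul x s)" if "s \<in> F" for s using rcont FU that by (meson subsetD)
  from min_left_ideal[OF H Fc Fmul Fassoc Fcont order.refl Fc Fne Fmul]
  obtain LF where LFa: "LF \<subseteq> F \<and> LF \<noteq> {} \<and> compactin T LF \<and> (\<forall>s\<in>F. \<forall>l\<in>LF. mul s l \<in> LF)
      \<and> (\<forall>l\<in>LF. (\<lambda>s. mul s l) ` F = LF)" ..
  note LF = conjunct1[OF LFa] conjunct1[OF conjunct2[OF LFa]] conjunct1[OF conjunct2[OF conjunct2[OF LFa]]]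
     conjunct1[OF conjunct2[OF conjunct2[OF conjunct2[OF LFa]]]] conjunct2[OF conjunct2[OF conjunct2[OF conjunct2[OF LFa]]]]
  have LFmul: "mul x y \<in> LF" if "x \<in> LF" "y \<in> LF" for x y using LF(1,4) that by (meson subsetD)
  have LFassoc: "mul (mul x y) z = mul x (mul y z)" if "x \<in> LF" "y \<in> LF" "z \<in> LF" for x y z
    using Fassoc LF(1) that by (meson subsetD)
  have LFcont: "continuous_map T T (\<lambda>x. mul x s)" if "s \<in> LF" for s using Fcont LF(1) that by (meson subsetD)
  from ellis[OF H LF(3) LF(2) LFmul LFassoc LFcont]
  obtain p where p: "p \<in> LF" "mul p p = p" by blast
  have pF: "p \<in> F" using p LF(1) by (meson subsetD)
  then obtain u where u: "u \<in> U" "p = act z0 u" unfolding F_def by blast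
  have pU: "p \<in> U" using pF FU by (meson subsetD)
  have actp: "act z p = p" if "rz z" for z
  proof -
    have "act z p = act (z * z0) u" using u act_mult by simp
    also have "z * z0 = z0" using z0 unfolding rz_def by blast
    finally show ?thesis using u by simp
  qed
  have main: "mul p (act z e) = p" if z: "rz z" and e: "e \<in> U" "mul e e = e" "mul e p = e" for z e
  proof -
    define x where "x = act z e"
    have "z0 * z = z" using z unfolding rz_def by blast
    then have "x = act (z0 * z) e" unfolding x_def by simp
    then have "x = act z0 (act z e)" using act_mult e(1) by simp
    then have xF: "x \<in> F" unfolding F_def using act_U e(1) by blast
    have xx: "mul x x = x" unfolding x_def using act_idem e(1,2) by blast
    have "act z (mul e p) = mul (act z e) (act z p)" using act_hom e(1) pU by blast
    then have "mul x p = act z (mul e p)" unfolding x_def using actp[OF z] by simp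
    then have xe: "x = mul x p" using e(3) x_def by simp
    have xL: "x \<in> LF" using LF(4) xF p(1) xe by metis
    have "p \<in> (\<lambda>s. mul s x) ` F" using LF(5) p(1) xL by blast
    then obtain s where s: "s \<in> F" "p = mul s x" by blast
    have "mul p x = mul s (mul x x)" using s Fassoc xF by simp
    then show ?thesis using xx s x_def by simp
  qed
  have "p \<in> U \<and> mul p p = p \<and> (\<forall>z. rz z \<longrightarrow> act z p = p) \<and>
     (\<forall>z e. rz z \<longrightarrow> e \<in> U \<longrightarrow> mul e e = e \<longrightarrow> mul e p = e \<longrightarrow> mul p (act z e) = p)"
    using pU p(2) actp main by blast
  then show ?thesis by blast
qed

end

context crts_act begin
lemma e0_exists:
  "\<exists>e0\<in>U. mul e0 e0 = e0 \<and> (\<forall>J. two_sided_ideal U mul J \<longrightarrow> e0 \<in> J) \<and>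
      (\<forall>f\<in>U. mul f f = f \<longrightarrow> idem_le mul f e0 \<longrightarrow> f = e0) \<and>
      (\<forall>z z'::'m. rz z \<longrightarrow> rz z' \<longrightarrow> act z e0 = act z' e0) \<and>
      (\<forall>z::'m. rz z \<longrightarrow> idem_le mul e0 (act z e0))"
proof -
  from p_exists obtain p where pa: "p \<in> U \<and> mul p p = p \<and> (\<forall>z::'m. rz z \<longrightarrow> act z p = p) \<and>
     (\<forall>(z::'m) e. rz z \<longrightarrow> e \<in> U \<longrightarrow> mul e e = e \<longrightarrow> mul e p = e \<longrightarrow> mul p (act z e) = p)" by blast
  have pU: "p \<in> U" and pp: "mul p p = p" and actp: "\<forall>z::'m. rz z \<longrightarrow> act z p = p"
    and main: "\<forall>(z::'m) e. rz z \<longrightarrow> e \<in> U \<longrightarrow> mul e e = e \<longrightarrow> mul e p = e \<longrightarrow> mul p (act z e) = p"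
    using pa by simp_all
  define J0 where "J0 = (\<lambda>x. mul x p) ` U"
  have J0: "J0 \<subseteq> U" "compactin T J0" "J0 \<noteq> {}"
    unfolding J0_def using U_mul pU U_ne image_compactin[OF U_cpt rcont[OF pU]] by auto
  have J0l: "\<And>s j. s \<in> U \<Longrightarrow> j \<in> J0 \<Longrightarrow> mul s j \<in> J0"
  proof -
    fix s j assume "s \<in> U" "j \<in> J0"
    then obtain x where "x \<in> U" "j = mul x p" unfolding J0_def by blast
    then have "mul s j = mul (mul s x) p" using U_assoc pU \<open>s \<in> U\<close> by simp
    then show "mul s j \<in> J0" unfolding J0_def using U_mul \<open>s \<in> U\<close> \<open>x \<in> U\<close> by blast
  qed
  from min_left_ideal[OF H U_cpt U_mul U_assoc rcont J0 J0l]
  obtain L where La: "L \<subseteq> J0 \<and> L \<noteq> {} \<and> compactin T L \<and> (\<forall>s\<in>U. \<forall>l\<in>L. mul s l \<in> L)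
      \<and> (\<forall>l\<in>L. (\<lambda>s. mul s l) ` U = L)" ..
  have L: "L \<subseteq> J0" "L \<noteq> {}" "compactin T L" "\<forall>s\<in>U. \<forall>l\<in>L. mul s l \<in> L"
      "\<forall>l\<in>L. (\<lambda>s. mul s l) ` U = L" using La by simp_all
  have LU: "L \<subseteq> U" using L(1) J0(1) by (rule order.trans)
  have Lmul: "mul x y \<in> L" if "x \<in> L" "y \<in> L" for x y using L(4) LU that by (meson subsetD)
  have Lassoc: "mul (mul x y) z = mul x (mul y z)" if "x \<in> L" "y \<in> L" "z \<in> L" for x y z
    using U_assoc LU that by (meson subsetD)
  have Lcont: "continuous_map T T (\<lambda>x. mul x s)" if "s \<in> L" for s using rcont LU that by (meson subsetD)
  from ellis[OF H L(3) L(2) Lmul Lassoc Lcont]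
  obtain e where e: "e \<in> L" "mul e e = e" by blast
  have eU: "e \<in> U" using e LU by blast
  have ep: "mul e p = e"
  proof -
    obtain w where "w \<in> U" "e = mul w p" using e L J0_def by blast
    then show ?thesis using U_assoc pU pp by metis
  qed
  define e0 where "e0 = mul p e"
  have e0U: "e0 \<in> U" unfolding e0_def using U_mul pU eU by blast
  have e0e0: "mul e0 e0 = e0"
  proof -
    have "mul e0 e0 = mul p (mul e (mul p e))" unfolding e0_def using U_assoc pU eU U_mul by simp
    also have "mul e (mul p e) = mul (mul e p) e" using U_assoc pU eU by simp
    finally show ?thesis using ep e unfolding e0_def by simp
  qed
  have e0L: "e0 \<in> L" unfolding e0_def using L pU e by blast
  have ideal: "e0 \<in> J" if J: "two_sided_ideal U mul J" for J
  proof -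
    obtain j where j: "j \<in> J" using J unfolding two_sided_ideal_def by blast
    have jU: "j \<in> U" using j J unfolding two_sided_ideal_def by blast
    define l where "l = mul j e0"
    have lJ: "l \<in> J" unfolding l_def using J j e0U unfolding two_sided_ideal_def by blast
    have lL: "l \<in> L" unfolding l_def using L jU e0L by blast
    have "e0 \<in> (\<lambda>s. mul s l) ` U" using L(5) lL e0L by blast
    then obtain s where "s \<in> U" "e0 = mul s l" by blast
    then show ?thesis using lJ J unfolding two_sided_ideal_def by blast
  qed
  have minimal: "f = e0" if f: "f \<in> U" "mul f f = f" "idem_le mul f e0" for f
  proof -
    have fe: "mul f e0 = f" "mul e0 f = f" using f unfolding idem_le_def by auto
    have "f \<in> L" using fe(1) L f e0L by metis
    then have "e0 \<in> (\<lambda>s. mul s f) ` U" using L(5) e0L by blast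
    then obtain s where s: "s \<in> U" "e0 = mul s f" by blast
    then have "mul e0 f = mul s (mul f f)" using U_assoc f by simp
    then have "mul e0 f = e0" using s f by simp
    then show ?thesis using fe by simp
  qed
  have actz: "act z e0 = p" if z: "rz z" for z
  proof -
    have "act z e0 = mul (act z p) (act z e)" unfolding e0_def using act_hom pU eU by blast
    also have "act z p = p" using actp z by blast
    also have "mul p (act z e) = p" using main z eU e(2) ep by blast
    finally show ?thesis .
  qed
  have lep: "idem_le mul e0 p"
    unfolding idem_le_def
  proof
    show "mul e0 p = e0" unfolding e0_def using U_assoc pU eU ep by simp
    show "mul p e0 = e0" unfolding e0_def using U_assoc pU eU pp by metis
  qed
  show ?thesis
  proof (intro bexI[of _ e0] conjI allI impI ballI)
    show "e0 \<in> U" by (rule e0U)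
    show "mul e0 e0 = e0" by (rule e0e0)
    show "e0 \<in> J" if "two_sided_ideal U mul J" for J using ideal that by blast
    show "f = e0" if "f \<in> U" "mul f f = f" "idem_le mul f e0" for f using minimal that by blast
    show "act z e0 = act z' e0" if "rz z" "rz z'" for z z' :: 'm using actz that by simp
    show "idem_le mul e0 (act z e0)" if "rz z" for z :: 'm using actz lep that by simp
  qed
qed

end

context crts_act begin
definition Ism where "Ism = \<Inter>{J. two_sided_ideal U mul J \<and> compactin T J}"

lemma U_ideal: "two_sided_ideal U mul U"
  unfolding two_sided_ideal_def using U_ne U_mul by blast

lemma Ism_props:
  assumes e0: "\<forall>J. two_sided_ideal U mul J \<longrightarrow> e0 \<in> J"
  shows "smallest_compact_ideal T mul = Ism" "two_sided_ideal U mul Ism" "closedin T Ism" "e0 \<in> Ism"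
proof -
  have fam: "U \<in> {J. two_sided_ideal U mul J \<and> compactin T J}" using U_ideal U_cpt by blast
  show e0I: "e0 \<in> Ism" unfolding Ism_def using e0 by blast
  have IU: "Ism \<subseteq> U" unfolding Ism_def using fam by blast
  show idl: "two_sided_ideal U mul Ism"
    unfolding two_sided_ideal_def
  proof (intro conjI ballI)
    show "Ism \<noteq> {}" using e0I by blast
    show "Ism \<subseteq> U" by (rule IU)
  next
    fix u i assume u: "u \<in> U" and i: "i \<in> Ism"
    show "mul u i \<in> Ism" "mul i u \<in> Ism"
      using u i unfolding Ism_def two_sided_ideal_def by blast+
  qed
  have clI: "closedin T Ism"
    unfolding Ism_def
    by (rule closedin_Inter) (use fam H compactin_imp_closedin in blast)+
  show "closedin T Ism" by (rule clI)
  have cI: "compactin T Ism" by (rule closedin_compact_space[OF cpt clI])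
  show "smallest_compact_ideal T mul = Ism"
    unfolding smallest_compact_ideal_def
  proof (rule the_equality)
    show "two_sided_ideal U mul Ism \<and> compactin T Ism \<and>
        (\<forall>J. two_sided_ideal U mul J \<and> compactin T J \<longrightarrow> Ism \<subseteq> J)"
      using idl cI unfolding Ism_def by blast
  next
    fix I assume I: "two_sided_ideal U mul I \<and> compactin T I \<and>
        (\<forall>J. two_sided_ideal U mul J \<and> compactin T J \<longrightarrow> I \<subseteq> J)"
    then have "I \<subseteq> Ism" using idl cI by blast
    moreover have "Ism \<subseteq> I" unfolding Ism_def using I by blast
    ultimately show "I = Ism" by blast
  qed
qed

end

fun tdc :: "('u \<Rightarrow> 'u \<Rightarrow> 'u) \<Rightarrow> ('m::monoid_mult set set \<Rightarrow> 'u) \<Rightarrow> nat \<Rightarrow> 'm set set \<Rightarrow> 'u" where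
  "tdc mul h 0 y = h y"
| "tdc mul h (Suc n) y = (if 2 \<le> card y then mul (h y) (tdc mul h n (parY y)) else h y)"

fun buc :: "('u \<Rightarrow> 'u \<Rightarrow> 'u) \<Rightarrow> ('m::monoid_mult set set \<Rightarrow> 'u) \<Rightarrow> nat \<Rightarrow> 'm set set \<Rightarrow> 'u" where
  "buc mul h 0 y = h y"
| "buc mul h (Suc n) y = (if 2 \<le> card y then mul (buc mul h n (parY y)) (h y) else h y)"

lemma closedin_all:
  assumes "\<And>i. i \<in> I \<Longrightarrow> closedin X {x \<in> topspace X. P i x}"
  shows "closedin X {x \<in> topspace X. \<forall>i\<in>I. P i x}"
proof (cases "I = {}")
  case True then show ?thesis by simp
next
  case False
  have "{x \<in> topspace X. \<forall>i\<in>I. P i x} = \<Inter>((\<lambda>i. {x \<in> topspace X. P i x}) ` I)"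
    using False by auto
  moreover have "closedin X (\<Inter>((\<lambda>i. {x \<in> topspace X. P i x}) ` I))"
  proof (rule closedin_Inter)
    show "(\<lambda>i. {x \<in> topspace X. P i x}) ` I \<noteq> {}" using False by simp
    fix S assume "S \<in> (\<lambda>i. {x \<in> topspace X. P i x}) ` I"
    then obtain i where "i \<in> I" "S = {x \<in> topspace X. P i x}" by blast
    then show "closedin X S" using assms by simp
  qed
  ultimately show ?thesis by simp
qed

lemma closedin_conj:
  "closedin X {x \<in> topspace X. P x} \<Longrightarrow> closedin X {x \<in> topspace X. Q x} \<Longrightarrow>
   closedin X {x \<in> topspace X. P x \<and> Q x}"
proof -
  assume a: "closedin X {x \<in> topspace X. P x}" "closedin X {x \<in> topspace X. Q x}"
  have "{x \<in> topspace X. P x \<and> Q x} = {x \<in> topspace X. P x} \<inter> {x \<in> topspace X. Q x}" by blast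
  then show ?thesis using a by (simp add: closedin_Int)
qed

lemma closedin_imp:
  "closedin X {x \<in> topspace X. Q x} \<Longrightarrow> closedin X {x \<in> topspace X. b \<longrightarrow> Q x}"
  by (cases b) simp_all

context crts_act begin

abbreviation YYm :: "'m set set set" where "YYm \<equiv> YY"

definition PT :: "('m set set \<Rightarrow> 'u) topology" where
  "PT = product_topology (\<lambda>_. T) YYm"

definition pm :: "('m set set \<Rightarrow> 'u) \<Rightarrow> ('m set set \<Rightarrow> 'u) \<Rightarrow> ('m set set \<Rightarrow> 'u)" where
  "pm f g = (\<lambda>y\<in>YYm. mul (f y) (g y))"

lemma PT_top: "topspace PT = (\<Pi>\<^sub>E y\<in>YYm. U)"
  unfolding PT_def by simp

lemma PT_H: "Hausdorff_space PT"
  unfolding PT_def Hausdorff_space_product_topology using H by blast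

lemma PT_cpt: "compact_space PT"
  unfolding PT_def compact_space_product_topology using cpt by blast

lemma proj_cont: "y \<in> YYm \<Longrightarrow> continuous_map PT T (\<lambda>f. f y)"
  unfolding PT_def by (rule continuous_map_product_projection)

lemma pm_cont: assumes s: "s \<in> topspace PT" shows "continuous_map PT PT (\<lambda>x. pm x s)"
  unfolding PT_def continuous_map_componentwise
proof (intro conjI ballI)
  show "(\<lambda>x. pm x s) ` topspace (product_topology (\<lambda>_. T) YYm) \<subseteq> extensional YYm"
    unfolding pm_def by auto
next
  fix k assume k: "k \<in> YYm"
  have sk: "s k \<in> U" using s k unfolding PT_top by auto
  have "continuous_map (product_topology (\<lambda>_. T) YYm) T ((\<lambda>u. mul u (s k)) \<circ> (\<lambda>x. x k))"
    by (rule continuous_map_compose[OF continuous_map_product_projection[OF k] rcont[OF sk]])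
  then show "continuous_map (product_topology (\<lambda>_. T) YYm) T (\<lambda>x. pm x s k)"
    unfolding pm_def using k by (simp add: o_def)
qed

lemma pm_top: "f \<in> topspace PT \<Longrightarrow> g \<in> topspace PT \<Longrightarrow> pm f g \<in> topspace PT"
  unfolding PT_top pm_def using U_mul by auto

lemma pm_assoc: "f \<in> topspace PT \<Longrightarrow> g \<in> topspace PT \<Longrightarrow> k \<in> topspace PT \<Longrightarrow>
   pm (pm f g) k = pm f (pm g k)"
  unfolding PT_top pm_def using U_assoc by (auto simp: fun_eq_iff PiE_iff)

lemma cl_eqv: assumes y: "y \<in> YYm"
  shows "closedin PT {f \<in> topspace PT. f (Y_act c y) = act c (f y)}"
proof (rule closedin_continuous_maps_eq[OF H])
  show "continuous_map PT T (\<lambda>f. f (Y_act c y))" by (rule proj_cont[OF Y_act_YY[OF y]])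
  have "continuous_map PT T (act c \<circ> (\<lambda>f. f y))"
    by (rule continuous_map_compose[OF proj_cont[OF y] act_cont])
  then show "continuous_map PT T (\<lambda>f. act c (f y))" by (simp add: o_def)
qed

lemma cl_mem: assumes y: "y \<in> YYm" and C: "closedin T C"
  shows "closedin PT {f \<in> topspace PT. f y \<in> C}"
  by (rule closedin_continuous_map_preimage[OF proj_cont[OF y] C])

lemma cl_eqc: assumes y: "y \<in> YYm" and w: "w \<in> U"
  shows "closedin PT {f \<in> topspace PT. f y = w}"
proof (rule closedin_continuous_maps_eq[OF H proj_cont[OF y]])
  show "continuous_map PT T (\<lambda>f. w)" using w by simp
qed

lemma cl_ra: assumes y: "y \<in> YYm" and w: "w \<in> U"
  shows "closedin PT {f \<in> topspace PT. mul (f y) w = f y}"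
proof (rule closedin_continuous_maps_eq[OF H _ proj_cont[OF y]])
  have "continuous_map PT T ((\<lambda>u. mul u w) \<circ> (\<lambda>f. f y))"
    by (rule continuous_map_compose[OF proj_cont[OF y] rcont[OF w]])
  then show "continuous_map PT T (\<lambda>f. mul (f y) w)" by (simp add: o_def)
qed

definition eqv :: "('m set set \<Rightarrow> 'u) \<Rightarrow> bool" where
  "eqv f \<longleftrightarrow> (\<forall>c. \<forall>y\<in>YYm. f (Y_act c y) = act c (f y))"

definition Phi :: "('m set set \<Rightarrow> 'u) set" where
  "Phi = {f \<in> topspace PT. eqv f \<and> (\<forall>y\<in>YYm. UNIV \<in> y \<longrightarrow> f y \<in> Ism)}"

end

lemma YY_induct[consumes 1]:
  assumes step: "\<And>y. (y :: 'm::{monoid_mult,finite} set set) \<in> YY \<Longrightarrow> (\<And>z. z \<in> YY \<Longrightarrow> card z < card y \<Longrightarrow> P z) \<Longrightarrow> P y"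
  shows "y \<in> YY \<Longrightarrow> P y"
proof (induction "card y" arbitrary: y rule: less_induct)
  case less
  show ?case by (rule step[OF less.prems]) (use less.hyps in blast)
qed

context crts_act begin

definition Hf :: "('m set set \<Rightarrow> 'u) \<Rightarrow> 'm set set \<Rightarrow> 'u" where
  "Hf h y = tdc mul h (card y - 1) y"
definition Gf :: "('m set set \<Rightarrow> 'u) \<Rightarrow> 'm set set \<Rightarrow> 'u" where
  "Gf h y = buc mul h (card y - 1) y"

lemma Hf_unfold: assumes y: "y \<in> YYm"
  shows "Hf h y = (if 2 \<le> card y then mul (h y) (Hf h (parY y)) else h y)"
proof (cases "2 \<le> card y")
  case True
  have "card y - 1 = Suc (card y - 2)" using True by simp
  moreover have "card (parY y) - 1 = card y - 2" using parY_props[OF y \<open>2 \<le> card y\<close>] by simp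
  ultimately show ?thesis unfolding Hf_def using True by simp
next
  case False
  then have "card y - 1 = 0" using card_YY[OF y] by simp
  then show ?thesis unfolding Hf_def using False by simp
qed

lemma Gf_unfold: assumes y: "y \<in> YYm"
  shows "Gf h y = (if 2 \<le> card y then mul (Gf h (parY y)) (h y) else h y)"
proof (cases "2 \<le> card y")
  case True
  have "card y - 1 = Suc (card y - 2)" using True by simp
  moreover have "card (parY y) - 1 = card y - 2" using parY_props[OF y \<open>2 \<le> card y\<close>] by simp
  ultimately show ?thesis unfolding Gf_def using True by simp
next
  case False
  then have "card y - 1 = 0" using card_YY[OF y] by simp
  then show ?thesis unfolding Gf_def using False by simp
qed

lemma Hf_U: assumes hU: "\<And>y. y \<in> YYm \<Longrightarrow> h y \<in> U" and y0: "y \<in> YYm" shows "Hf h y \<in> U"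
using y0 proof (induction "card y" arbitrary: y rule: less_induct)
  case less
  show ?case
  proof (cases "2 \<le> card y")
    case True
    have p: "parY y \<in> YYm" "card (parY y) < card y" using parY_props[OF less.prems \<open>2 \<le> card y\<close>] by auto
    show ?thesis using Hf_unfold[OF less.prems] True U_mul hU[OF less.prems] less.hyps[OF p(2) p(1)] by simp
  next
    case False then show ?thesis using Hf_unfold[OF less.prems] hU[OF less.prems] by simp
  qed
qed

lemma Gf_U: assumes hU: "\<And>y. y \<in> YYm \<Longrightarrow> h y \<in> U" and y0: "y \<in> YYm" shows "Gf h y \<in> U"
using y0 proof (induction "card y" arbitrary: y rule: less_induct)
  case less
  show ?case
  proof (cases "2 \<le> card y")
    case True
    have p: "parY y \<in> YYm" "card (parY y) < card y" using parY_props[OF less.prems \<open>2 \<le> card y\<close>] by auto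
    show ?thesis using Gf_unfold[OF less.prems] True U_mul hU[OF less.prems] less.hyps[OF p(2) p(1)] by simp
  next
    case False then show ?thesis using Gf_unfold[OF less.prems] hU[OF less.prems] by simp
  qed
qed

lemma Hf_eqv:
  assumes hU: "\<And>y. y \<in> YYm \<Longrightarrow> h y \<in> U" and hid: "\<And>y. y \<in> YYm \<Longrightarrow> mul (h y) (h y) = h y"
    and heq: "eqv h"
  and y0: "y \<in> YYm" shows "Hf h (Y_act c y) = act c (Hf h y)"
using y0 proof (induction "card y" arbitrary: y rule: less_induct)
  case less
  have y: "y \<in> YYm" by (rule less.prems)
  have cy: "Y_act c y \<in> YYm" by (rule Y_act_YY[OF y])
  have hcy: "h (Y_act c y) = act c (h y)" using heq y unfolding eqv_def by blast
  show ?case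
  proof (cases "2 \<le> card y")
    case False
    then have "\<not> 2 \<le> card (Y_act c y)" using card_act_le[OF y, of c] by simp
    then show ?thesis using Hf_unfold[OF y] Hf_unfold[OF cy] False hcy by simp
  next
    case True
    have p: "parY y \<in> YYm" "card (parY y) < card y" using parY_props[OF y \<open>2 \<le> card y\<close>] by auto
    have IH: "Hf h (Y_act c (parY y)) = act c (Hf h (parY y))" by (rule less.hyps[OF p(2) p(1)])
    have "act c (Hf h y) = act c (mul (h y) (Hf h (parY y)))" using Hf_unfold[OF y] True by simp
    also have "\<dots> = mul (h (Y_act c y)) (Hf h (Y_act c (parY y)))"
      using act_hom hU[OF y] Hf_U[OF hU p(1)] hcy IH by simp
    finally have eq: "act c (Hf h y) = mul (h (Y_act c y)) (Hf h (Y_act c (parY y)))" .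
    show ?thesis
    proof (cases "Y_act c (parY y) = Y_act c y")
      case True
      show ?thesis
      proof (cases "2 \<le> card (Y_act c y)")
        case True2: True
        have pc: "parY (Y_act c y) \<in> YYm" using parY_props[OF cy True2] by auto
        have "act c (Hf h y) = mul (h (Y_act c y)) (mul (h (Y_act c y)) (Hf h (parY (Y_act c y))))"
          using eq True Hf_unfold[OF cy] True2 by simp
        also have "\<dots> = mul (mul (h (Y_act c y)) (h (Y_act c y))) (Hf h (parY (Y_act c y)))"
          using U_assoc hU[OF cy] Hf_U[OF hU pc] by simp
        also have "\<dots> = Hf h (Y_act c y)" using hid[OF cy] Hf_unfold[OF cy] True2 by simp
        finally show ?thesis by simp
      next
        case False2: False
        then show ?thesis using eq True Hf_unfold[OF cy] hid[OF cy] by simp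
      qed
    next
      case False
      then have "2 \<le> card (Y_act c y) \<and> Y_act c (parY y) = parY (Y_act c y)"
        using par_act[OF y \<open>2 \<le> card y\<close>, of c] by blast
      then show ?thesis using eq Hf_unfold[OF cy] by simp
    qed
  qed
qed

lemma Gf_eqv:
  assumes hU: "\<And>y. y \<in> YYm \<Longrightarrow> h y \<in> U" and hid: "\<And>y. y \<in> YYm \<Longrightarrow> mul (h y) (h y) = h y"
    and heq: "eqv h"
  and y0: "y \<in> YYm" shows "Gf h (Y_act c y) = act c (Gf h y)"
using y0 proof (induction "card y" arbitrary: y rule: less_induct)
  case less
  have y: "y \<in> YYm" by (rule less.prems)
  have cy: "Y_act c y \<in> YYm" by (rule Y_act_YY[OF y])
  have hcy: "h (Y_act c y) = act c (h y)" using heq y unfolding eqv_def by blast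
  show ?case
  proof (cases "2 \<le> card y")
    case False
    then have "\<not> 2 \<le> card (Y_act c y)" using card_act_le[OF y, of c] by simp
    then show ?thesis using Gf_unfold[OF y] Gf_unfold[OF cy] False hcy by simp
  next
    case True
    have p: "parY y \<in> YYm" "card (parY y) < card y" using parY_props[OF y \<open>2 \<le> card y\<close>] by auto
    have IH: "Gf h (Y_act c (parY y)) = act c (Gf h (parY y))" by (rule less.hyps[OF p(2) p(1)])
    have "act c (Gf h y) = act c (mul (Gf h (parY y)) (h y))" using Gf_unfold[OF y] True by simp
    also have "\<dots> = mul (Gf h (Y_act c (parY y))) (h (Y_act c y))"
      using act_hom hU[OF y] Gf_U[OF hU p(1)] hcy IH by simp
    finally have eq: "act c (Gf h y) = mul (Gf h (Y_act c (parY y))) (h (Y_act c y))" .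
    show ?thesis
    proof (cases "Y_act c (parY y) = Y_act c y")
      case True
      show ?thesis
      proof (cases "2 \<le> card (Y_act c y)")
        case True2: True
        have pc: "parY (Y_act c y) \<in> YYm" using parY_props[OF cy True2] by auto
        have "act c (Gf h y) = mul (mul (Gf h (parY (Y_act c y))) (h (Y_act c y))) (h (Y_act c y))"
          using eq True Gf_unfold[OF cy] True2 by simp
        also have "\<dots> = mul (Gf h (parY (Y_act c y))) (mul (h (Y_act c y)) (h (Y_act c y)))"
          using U_assoc hU[OF cy] Gf_U[OF hU pc] by simp
        also have "\<dots> = Gf h (Y_act c y)" using hid[OF cy] Gf_unfold[OF cy] True2 by simp
        finally show ?thesis by simp
      next
        case False2: False
        then show ?thesis using eq True Gf_unfold[OF cy] hid[OF cy] by simp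
      qed
    next
      case False
      then have "2 \<le> card (Y_act c y) \<and> Y_act c (parY y) = parY (Y_act c y)"
        using par_act[OF y \<open>2 \<le> card y\<close>, of c] by blast
      then show ?thesis using eq Gf_unfold[OF cy] by simp
    qed
  qed
qed

end

context crts_act begin

lemma Ism_facts: "two_sided_ideal U mul Ism" "closedin T Ism" "smallest_compact_ideal T mul = Ism"
proof -
  from e0_exists obtain e0 where "e0 \<in> U" "\<forall>J. two_sided_ideal U mul J \<longrightarrow> e0 \<in> J" by blast
  then show "two_sided_ideal U mul Ism" "closedin T Ism" "smallest_compact_ideal T mul = Ism"
    using Ism_props by blast+
qed

lemma Ism_l: "u \<in> U \<Longrightarrow> i \<in> Ism \<Longrightarrow> mul u i \<in> Ism"
  using Ism_facts(1) unfolding two_sided_ideal_def by blast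
lemma Ism_r: "u \<in> U \<Longrightarrow> i \<in> Ism \<Longrightarrow> mul i u \<in> Ism"
  using Ism_facts(1) unfolding two_sided_ideal_def by blast
lemma Ism_U: "Ism \<subseteq> U"
  using Ism_facts(1) unfolding two_sided_ideal_def by blast

lemma top_U: "f \<in> topspace PT \<Longrightarrow> y \<in> YYm \<Longrightarrow> f y \<in> U"
  unfolding PT_top by auto

lemma cl_eqvset: "closedin PT {f \<in> topspace PT. eqv f}"
proof -
  have "{f \<in> topspace PT. eqv f} = {f \<in> topspace PT. \<forall>c\<in>UNIV. \<forall>y\<in>YYm. f (Y_act c y) = act c (f y)}"
    unfolding eqv_def by simp
  moreover have "closedin PT {f \<in> topspace PT. \<forall>c\<in>UNIV. \<forall>y\<in>YYm. f (Y_act c y) = act c (f y)}"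
    by (intro closedin_all cl_eqv)
  ultimately show ?thesis by simp
qed

lemma cl_maxset: "closedin PT {f \<in> topspace PT. \<forall>y\<in>YYm. UNIV \<in> y \<longrightarrow> f y \<in> Ism}"
  by (intro closedin_all closedin_imp cl_mem Ism_facts(2))

lemma cl_fixset: assumes hU: "\<And>y. y \<in> YYm \<Longrightarrow> h y \<in> U"
  shows "closedin PT {f \<in> topspace PT. \<forall>y\<in>YYm. card y \<le> k \<longrightarrow> f y = h y}"
  by (intro closedin_all closedin_imp cl_eqc hU)

lemma cl_raset: assumes hU: "\<And>y. y \<in> YYm \<Longrightarrow> h y \<in> U" and k: "1 \<le> k"
  shows "closedin PT {f \<in> topspace PT. \<forall>y\<in>YYm. card y = Suc k \<longrightarrow> mul (f y) (h (parY y)) = f y}"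
proof (intro closedin_all)
  fix y assume y: "y \<in> YYm"
  show "closedin PT {f \<in> topspace PT. card y = Suc k \<longrightarrow> mul (f y) (h (parY y)) = f y}"
  proof (cases "card y = Suc k")
    case True
    then have "2 \<le> card y" using k by simp
    then have "parY y \<in> YYm" using parY_props[OF y] by blast
    then show ?thesis using cl_ra[OF y hU] True by simp
  next
    case False then show ?thesis by simp
  qed
qed

definition Good :: "nat \<Rightarrow> ('m set set \<Rightarrow> 'u) \<Rightarrow> bool" where
  "Good k h \<longleftrightarrow> h \<in> Phi \<and> (\<forall>y\<in>YYm. mul (h y) (h y) = h y) \<and>
     (\<forall>y\<in>YYm. 2 \<le> card y \<and> card y \<le> k \<longrightarrow> mul (h y) (h (parY y)) = h y)"

lemma Hf_low:
  assumes G: "Good k h" and y0: "y \<in> YYm" and c: "card y \<le> k"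
  shows "Hf h y = h y"
  using y0 c
proof (induction "card y" arbitrary: y rule: less_induct)
  case less
  have y: "y \<in> YYm" by (rule less.prems(1))
  show ?case
  proof (cases "2 \<le> card y")
    case True
    have p: "parY y \<in> YYm" "card (parY y) < card y" using parY_props[OF y \<open>2 \<le> card y\<close>] by auto
    have "Hf h (parY y) = h (parY y)" using less.hyps[OF p(2) p(1)] p(2) less.prems(2) by simp
    then have "Hf h y = mul (h y) (h (parY y))" using Hf_unfold[OF y] True by simp
    also have "\<dots> = h y" using G y True less.prems(2) unfolding Good_def by blast
    finally show ?thesis .
  next
    case False then show ?thesis using Hf_unfold[OF y] by simp
  qed
qed

lemma step:
  assumes G: "Good k h" and k: "1 \<le> k"
  shows "\<exists>h'. Good (Suc k) h'"
proof -
  have hPhi: "h \<in> Phi" using G unfolding Good_def by blast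
  have hU: "\<And>y. y \<in> YYm \<Longrightarrow> h y \<in> U" using hPhi top_U unfolding Phi_def by blast
  have hid: "\<And>y. y \<in> YYm \<Longrightarrow> mul (h y) (h y) = h y" using G unfolding Good_def by blast
  have heq: "eqv h" using hPhi unfolding Phi_def by blast
  have hI: "\<And>y. y \<in> YYm \<Longrightarrow> UNIV \<in> y \<Longrightarrow> h y \<in> Ism" using hPhi unfolding Phi_def by blast
  have hra: "\<And>y. y \<in> YYm \<Longrightarrow> 2 \<le> card y \<Longrightarrow> card y \<le> k \<Longrightarrow> mul (h y) (h (parY y)) = h y"
    using G unfolding Good_def by blast
  define Tk where "Tk = {f \<in> topspace PT. eqv f \<and> (\<forall>y\<in>YYm. UNIV \<in> y \<longrightarrow> f y \<in> Ism) \<and>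
      (\<forall>y\<in>YYm. card y \<le> k \<longrightarrow> f y = h y) \<and>
      (\<forall>y\<in>YYm. card y = Suc k \<longrightarrow> mul (f y) (h (parY y)) = f y)}"
  have TkPT: "Tk \<subseteq> topspace PT" unfolding Tk_def by blast
  have clTk: "closedin PT Tk"
    unfolding Tk_def
    by (rule closedin_conj[OF cl_eqvset closedin_conj[OF cl_maxset closedin_conj[OF cl_fixset[OF hU] cl_raset[OF hU k]]]])
  have cTk: "compactin PT Tk" by (rule closedin_compact_space[OF PT_cpt clTk])
  define W where "W = restrict (Hf h) YYm"
  have WTk: "W \<in> Tk"
    unfolding Tk_def
  proof (intro CollectI conjI ballI impI)
    show "W \<in> topspace PT" unfolding PT_top W_def using Hf_U[OF hU] by auto
    show "eqv W" unfolding eqv_def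
    proof (intro allI ballI)
      fix c y assume y: "y \<in> YYm"
      have "Y_act c y \<in> YYm" by (rule Y_act_YY[OF y])
      then show "W (Y_act c y) = act c (W y)" unfolding W_def using y Hf_eqv[OF hU hid heq y] by simp
    qed
  next
    fix y assume y: "y \<in> YYm" and u: "UNIV \<in> y"
    show "W y \<in> Ism"
    proof (cases "2 \<le> card y")
      case True
      have p: "parY y \<in> YYm" using parY_props[OF y \<open>2 \<le> card y\<close>] by auto
      have "W y = mul (h y) (Hf h (parY y))" unfolding W_def using y Hf_unfold[OF y] True by simp
      then show ?thesis using Ism_r hI[OF y u] Hf_U[OF hU p] by simp
    next
      case False then show ?thesis unfolding W_def using y Hf_unfold[OF y] hI[OF y u] by simp
    qed
  next
    fix y assume y: "y \<in> YYm" and c: "card y \<le> k"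
    show "W y = h y" unfolding W_def using y Hf_low[OF G y c] by simp
  next
    fix y assume y: "y \<in> YYm" and c: "card y = Suc k"
    have c2: "2 \<le> card y" using c k by simp
    have p: "parY y \<in> YYm" "card (parY y) = k" using parY_props[OF y c2] c by auto
    have "W y = mul (h y) (h (parY y))"
      unfolding W_def using y Hf_unfold[OF y] c2 Hf_low[OF G p(1)] p(2) by simp
    moreover have "mul (mul (h y) (h (parY y))) (h (parY y)) = mul (h y) (h (parY y))"
      using U_assoc hU[OF y] hU[OF p(1)] hid[OF p(1)] by simp
    ultimately show "mul (W y) (h (parY y)) = W y" by simp
  qed
  have Tkne: "Tk \<noteq> {}" using WTk by blast
  have TkD: "f \<in> topspace PT \<and> eqv f \<and> (\<forall>y\<in>YYm. UNIV \<in> y \<longrightarrow> f y \<in> Ism) \<and>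
      (\<forall>y\<in>YYm. card y \<le> k \<longrightarrow> f y = h y) \<and>
      (\<forall>y\<in>YYm. card y = Suc k \<longrightarrow> mul (f y) (h (parY y)) = f y)" if "f \<in> Tk" for f
    using that unfolding Tk_def by (rule CollectD)
  have Tkmul: "pm f g \<in> Tk" if f: "f \<in> Tk" and g: "g \<in> Tk" for f g
  proof -
    note fD = TkD[OF f] and gD = TkD[OF g]
    have fT: "f \<in> topspace PT" and gT: "g \<in> topspace PT" using fD gD by simp_all
    have fe: "eqv f" and ge: "eqv g" using fD gD by simp_all
    have fI: "\<forall>y\<in>YYm. UNIV \<in> y \<longrightarrow> f y \<in> Ism" using fD by simp
    have fk: "\<forall>y\<in>YYm. card y \<le> k \<longrightarrow> f y = h y" using fD by simp
    have gk: "\<forall>y\<in>YYm. card y \<le> k \<longrightarrow> g y = h y" using gD by simp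
    have gr: "\<forall>y\<in>YYm. card y = Suc k \<longrightarrow> mul (g y) (h (parY y)) = g y" using gD by simp
    have pmy: "pm f g y = mul (f y) (g y)" if "y \<in> YYm" for y unfolding pm_def using that by simp
    have "pm f g \<in> topspace PT" by (rule pm_top[OF fT gT])
    moreover have "eqv (pm f g)" unfolding eqv_def
    proof (intro allI ballI)
      fix c y assume y: "y \<in> YYm"
      have cy: "Y_act c y \<in> YYm" by (rule Y_act_YY[OF y])
      have e1: "f (Y_act c y) = act c (f y)" using fe y unfolding eqv_def by blast
      have e2: "g (Y_act c y) = act c (g y)" using ge y unfolding eqv_def by blast
      have "pm f g (Y_act c y) = mul (act c (f y)) (act c (g y))" using pmy[OF cy] e1 e2 by simp
      also have "\<dots> = act c (mul (f y) (g y))" using act_hom top_U[OF fT y] top_U[OF gT y] by simp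
      finally show "pm f g (Y_act c y) = act c (pm f g y)" using pmy[OF y] by simp
    qed
    moreover have "\<forall>y\<in>YYm. UNIV \<in> y \<longrightarrow> pm f g y \<in> Ism"
    proof (intro ballI impI)
      fix y assume y: "y \<in> YYm" and u: "UNIV \<in> y"
      have "f y \<in> Ism" using fI y u by blast
      then show "pm f g y \<in> Ism" using pmy[OF y] Ism_r top_U[OF gT y] by simp
    qed
    moreover have "\<forall>y\<in>YYm. card y \<le> k \<longrightarrow> pm f g y = h y"
    proof (intro ballI impI)
      fix y assume y: "y \<in> YYm" and c: "card y \<le> k"
      have "f y = h y" "g y = h y" using fk gk y c by blast+
      then show "pm f g y = h y" using pmy[OF y] hid[OF y] by simp
    qed
    moreover have "\<forall>y\<in>YYm. card y = Suc k \<longrightarrow> mul (pm f g y) (h (parY y)) = pm f g y"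
    proof (intro ballI impI)
      fix y assume y: "y \<in> YYm" and c: "card y = Suc k"
      have c2: "2 \<le> card y" using c k by simp
      have p: "parY y \<in> YYm" using parY_props[OF y c2] by auto
      have gr1: "mul (g y) (h (parY y)) = g y" using gr y c by blast
      have "mul (pm f g y) (h (parY y)) = mul (f y) (mul (g y) (h (parY y)))"
        using pmy[OF y] U_assoc top_U[OF fT y] top_U[OF gT y] hU[OF p] by simp
      then show "mul (pm f g y) (h (parY y)) = pm f g y" using gr1 pmy[OF y] by simp
    qed
    ultimately show ?thesis unfolding Tk_def by (intro CollectI conjI)
  qed
  have Tkassoc: "pm (pm x y) z = pm x (pm y z)" if "x \<in> Tk" "y \<in> Tk" "z \<in> Tk" for x y z
    using pm_assoc that TkPT by (meson subsetD)
  have Tkcont: "continuous_map PT PT (\<lambda>x. pm x s)" if "s \<in> Tk" for s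
    using pm_cont that TkPT by (meson subsetD)
  from ellis[OF PT_H cTk Tkne Tkmul Tkassoc Tkcont]
  obtain f where f: "f \<in> Tk" "pm f f = f" by blast
  have fT: "f \<in> topspace PT" using f TkPT by blast
  have fk: "\<forall>y\<in>YYm. card y \<le> k \<longrightarrow> f y = h y" using f(1) unfolding Tk_def by blast
  have fr: "\<forall>y\<in>YYm. card y = Suc k \<longrightarrow> mul (f y) (h (parY y)) = f y" using f(1) unfolding Tk_def by blast
  have "Good (Suc k) f"
    unfolding Good_def
  proof (intro conjI ballI impI)
    show "f \<in> Phi" using f unfolding Tk_def Phi_def by blast
  next
    fix y assume y: "y \<in> YYm"
    have "pm f f y = f y" using f by simp
    then show "mul (f y) (f y) = f y" unfolding pm_def using y by simp
  next
    fix y assume y: "y \<in> YYm" and c: "2 \<le> card y \<and> card y \<le> Suc k"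
    have c2: "2 \<le> card y" using c by simp
    have p: "parY y \<in> YYm" "card (parY y) = card y - 1"
      using parY_props[OF y c2] by auto
    have "card (parY y) \<le> k" using p(2) c by linarith
    then have fp: "f (parY y) = h (parY y)" using fk p(1) by blast
    show "mul (f y) (f (parY y)) = f y"
    proof (cases "card y \<le> k")
      case True
      have "f y = h y" using fk y True by blast
      then show ?thesis using fp hra[OF y c2 True] by simp
    next
      case False
      then have "card y = Suc k" using c by simp
      then show ?thesis using fr y fp by simp
    qed
  qed
  then show ?thesis by blast
qed

end

definition repX :: "'m::monoid_mult set \<Rightarrow> 'm" where
  "repX i = (SOME a. range ((*) a) = i)"

lemma repX: "i \<in> XX \<Longrightarrow> range ((*) (repX i)) = i"
  unfolding repX_def XX_def by (rule someI_ex) blast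

lemma topY_XX: "(y :: 'm::{monoid_mult,finite} set set) \<in> YY \<Longrightarrow> topY y \<in> XX"
  using topY(1) YY_sub by blast

lemma fin_inv: assumes "x * y = (1::'m::{monoid_mult,finite})" shows "y * x = 1"
proof -
  have "inj ((*) y)"
  proof (rule injI)
    fix a b assume "y * a = y * b"
    then have "x * (y * a) = x * (y * b)" by simp
    then show "a = b" using assms by (simp add: mult.assoc[symmetric])
  qed
  then have "surj ((*) y)" using finite_UNIV_inj_surj[of "(*) y"] by simp
  then obtain t where t: "y * t = 1" by (metis surjD)
  have "x = x * (y * t)" using t by simp
  also have "\<dots> = t" using assms by (simp add: mult.assoc[symmetric])
  finally show ?thesis using t by simp
qed

lemma struct2:
  assumes c: "card (XX :: 'm::{monoid_mult,finite} set set) \<le> 2" and art: "almost_R_trivial TYPE('m)"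
    and m: "range ((*) m) \<noteq> (UNIV :: 'm set)"
  shows "rz m"
  unfolding rz_def
proof
  fix a :: 'm
  have in1: "range ((*) (a * m)) \<in> XX" unfolding XX_def by blast
  have in2: "range ((*) m) \<in> XX" unfolding XX_def by blast
  have in3: "(UNIV :: 'm set) \<in> XX" by (rule UNIV_XX)
  have am: "range ((*) (a * m)) = UNIV \<or> range ((*) (a * m)) = range ((*) m)"
  proof (rule ccontr)
    assume "\<not> ?thesis"
    then have "card {range ((*) (a * m)), range ((*) m), UNIV} = 3" using m by auto
    moreover have sub: "{range ((*) (a * m)), range ((*) m), UNIV} \<subseteq> (XX :: 'm set set)"
      using in1 in2 in3 by blast
    moreover have "finite (XX :: 'm set set)" by (rule XX_finite)
    ultimately have "card {range ((*) (a * m)), range ((*) m), UNIV} \<le> card (XX :: 'm set set)"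
      using card_mono by metis
    then show False using c \<open>card {range ((*) (a * m)), range ((*) m), UNIV} = 3\<close> by simp
  qed
  show "a * m = m"
  proof (cases "range ((*) (a * m)) = UNIV")
    case True
    then obtain n where "(a * m) * n = 1" by (metis UNIV_I imageE)
    then have "a * (m * n) = 1" by (simp add: mult.assoc)
    then have "(m * n) * a = 1" by (rule fin_inv)
    then have "m * (n * a) = 1" by (simp add: mult.assoc)
    then have "range ((*) m) = UNIV"
    proof -
      assume e: "m * (n * a) = 1"
      have "t \<in> range ((*) m)" for t
      proof -
        have "t = m * (n * a * t)" using e by (simp add: mult.assoc[symmetric])
        then show ?thesis by blast
      qed
      then show ?thesis by blast
    qed
    then show ?thesis using m by simp
  next
    case False
    then have eq: "range ((*) (a * m)) = range ((*) m)" using am by blast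
    show ?thesis
    proof (rule ccontr)
      assume ne: "a * m \<noteq> m"
      have "R_equiv (a * m) m" unfolding R_equiv_def using eq .
      then have "\<forall>b. b * m = m" using art ne unfolding almost_R_trivial_def by blast
      then show False using ne by blast
    qed
  qed
qed

context crts_act begin

lemma rep_act:
  assumes Zp: "\<forall>z z'::'m. rz z \<longrightarrow> rz z' \<longrightarrow> act z e = act z' e"
    and eq: "range ((*) a) = range ((*) (b::'m))"
  shows "act a e = act b e"
proof (cases "a = b")
  case True then show ?thesis by simp
next
  case False
  have "R_equiv a b" "R_equiv b a" unfolding R_equiv_def using eq by simp_all
  then have "rz b" "rz a" using art False unfolding almost_R_trivial_def rz_def by metis+
  then show ?thesis using Zp by blast
qed

definition tb :: "'u \<Rightarrow> 'm set set \<Rightarrow> 'u" where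
  "tb e y = act (repX (topY y)) e"

lemma tb_eqv:
  assumes Zp: "\<forall>z z'::'m. rz z \<longrightarrow> rz z' \<longrightarrow> act z e = act z' e" and eU: "e \<in> U"
    and y: "y \<in> YYm"
  shows "tb e (Y_act c y) = act c (tb e y)"
proof -
  define r where "r = repX (topY y)"
  have r: "range ((*) r) = topY y" unfolding r_def by (rule repX[OF topY_XX[OF y]])
  have "topY (Y_act c y) = X_act c (topY y)" by (rule topY_act[OF y])
  also have "\<dots> = range ((*) (c * r))" using r X_act_range by metis
  finally have t: "topY (Y_act c y) = range ((*) (c * r))" .
  have "range ((*) (repX (topY (Y_act c y)))) = topY (Y_act c y)"
    by (rule repX[OF topY_XX[OF Y_act_YY[OF y]]])
  then have "act (repX (topY (Y_act c y))) e = act (c * r) e" using rep_act[OF Zp] t by metis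
  also have "\<dots> = act c (act r e)" using act_mult eU by blast
  finally show ?thesis unfolding tb_def r_def .
qed

lemma tb_max:
  assumes Zp: "\<forall>z z'::'m. rz z \<longrightarrow> rz z' \<longrightarrow> act z e = act z' e" and eU: "e \<in> U"
    and y: "y \<in> YYm" and u: "UNIV \<in> y"
  shows "tb e y = e"
proof -
  have "topY y = UNIV" by (rule topY_UNIV[OF y u])
  then have "range ((*) (repX (topY y))) = range ((*) (1::'m))" using repX[OF topY_XX[OF y]] by simp
  then have "act (repX (topY y)) e = act 1 e" by (rule rep_act[OF Zp])
  then show ?thesis unfolding tb_def using act1 eU by simp
qed

lemma e0_obtain:
  obtains e0 where "e0 \<in> U" "mul e0 e0 = e0" "e0 \<in> Ism"
      "\<forall>f\<in>U. mul f f = f \<longrightarrow> idem_le mul f e0 \<longrightarrow> f = e0"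
      "\<forall>z z'::'m. rz z \<longrightarrow> rz z' \<longrightarrow> act z e0 = act z' e0"
      "\<forall>z::'m. rz z \<longrightarrow> idem_le mul e0 (act z e0)"
proof -
  from e0_exists obtain e0 where e: "e0 \<in> U \<and> mul e0 e0 = e0 \<and> (\<forall>J. two_sided_ideal U mul J \<longrightarrow> e0 \<in> J) \<and>
      (\<forall>f\<in>U. mul f f = f \<longrightarrow> idem_le mul f e0 \<longrightarrow> f = e0) \<and>
      (\<forall>z z'::'m. rz z \<longrightarrow> rz z' \<longrightarrow> act z e0 = act z' e0) \<and>
      (\<forall>z::'m. rz z \<longrightarrow> idem_le mul e0 (act z e0))" by blast
  have "e0 \<in> Ism" using Ism_props(4) e by blast
  then show ?thesis using that e by blast
qed

end

context crts_act begin

lemma idem_le_trans: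
  assumes "u \<in> U" "v \<in> U" "w \<in> U" "idem_le mul u v" "idem_le mul v w"
  shows "idem_le mul u w"
proof -
  have a: "mul u v = u" "mul v u = u" "mul v w = v" "mul w v = v" using assms(4,5) unfolding idem_le_def by auto
  have "mul u w = mul (mul u v) w" using a by simp
  also have "\<dots> = mul u (mul v w)" using U_assoc assms(1-3) by blast
  finally have 1: "mul u w = u" using a by simp
  have "mul w u = mul w (mul v u)" using a by simp
  also have "\<dots> = mul (mul w v) u" using U_assoc assms(1-3) by simp
  finally have 2: "mul w u = u" using a by simp
  show ?thesis unfolding idem_le_def using 1 2 by blast
qed

lemma Good1: obtains h where "Good 1 h"
proof -
  obtain e0 where e0: "e0 \<in> U" "mul e0 e0 = e0" "e0 \<in> Ism"
      "\<forall>z z'::'m. rz z \<longrightarrow> rz z' \<longrightarrow> act z e0 = act z' e0"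
    using e0_obtain by metis
  define TB where "TB = restrict (tb e0) YYm"
  have "TB \<in> topspace PT" unfolding PT_top TB_def tb_def using act_U e0(1) by auto
  moreover have "eqv TB" unfolding eqv_def
  proof (intro allI ballI)
    fix c y assume y: "y \<in> YYm"
    have "Y_act c y \<in> YYm" by (rule Y_act_YY[OF y])
    then show "TB (Y_act c y) = act c (TB y)" unfolding TB_def using y tb_eqv[OF e0(4) e0(1) y] by simp
  qed
  moreover have "\<forall>y\<in>YYm. UNIV \<in> y \<longrightarrow> TB y \<in> Ism"
    unfolding TB_def using tb_max[OF e0(4) e0(1)] e0(3) by simp
  moreover have "\<forall>y\<in>YYm. mul (TB y) (TB y) = TB y"
    unfolding TB_def tb_def using act_idem e0(1,2) by simp
  ultimately have "Good 1 TB" unfolding Good_def Phi_def by auto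
  then show ?thesis using that by blast
qed

lemma Good_all: "1 \<le> k \<Longrightarrow> \<exists>h. Good k h"
proof (induction k)
  case 0 then show ?case by simp
next
  case (Suc k)
  show ?case
  proof (cases "k = 0")
    case True then show ?thesis using Good1 by (metis One_nat_def)
  next
    case False
    then have "1 \<le> k" by simp
    then obtain h where "Good k h" using Suc.IH by blast
    then show ?thesis using step \<open>1 \<le> k\<close> by blast
  qed
qed

lemma card_YY_le: "y \<in> YYm \<Longrightarrow> card y \<le> card (XX :: 'm set set)"
  using card_mono[OF XX_finite] YY_sub by metis

lemma final_general:
  "\<exists>g. (\<forall>y\<in>YYm. g y \<in> idempotents U mul) \<and>
       (\<forall>a. \<forall>y\<in>YYm. g (Y_act a y) = act a (g y)) \<and>
       (\<forall>x\<in>YYm. \<forall>y\<in>YYm. Y_le x y \<longrightarrow> idem_le mul (g y) (g x)) \<and>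
       (\<forall>y::'m set set. Y_maximal y \<longrightarrow> g y \<in> Ism)"
proof -
  have "1 \<le> card (XX :: 'm set set)"
    using UNIV_XX XX_finite by (metis One_nat_def Suc_leI card_gt_0_iff empty_iff)
  then obtain hs where Gd: "Good (card (XX :: 'm set set)) hs" using Good_all by blast
  have hPhi: "hs \<in> Phi" using Gd unfolding Good_def by blast
  have hU: "\<And>y. y \<in> YYm \<Longrightarrow> hs y \<in> U" using hPhi top_U unfolding Phi_def by blast
  have hid: "\<And>y. y \<in> YYm \<Longrightarrow> mul (hs y) (hs y) = hs y" using Gd unfolding Good_def by blast
  have heq: "eqv hs" using hPhi unfolding Phi_def by blast
  have hI: "\<And>y. y \<in> YYm \<Longrightarrow> UNIV \<in> y \<Longrightarrow> hs y \<in> Ism" using hPhi unfolding Phi_def by blast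
  have hra: "\<And>y. y \<in> YYm \<Longrightarrow> 2 \<le> card y \<Longrightarrow> mul (hs y) (hs (parY y)) = hs y"
    using Gd card_YY_le unfolding Good_def by blast
  have RAle: "mul (hs y) (hs x) = hs y" if x: "x \<in> YYm" and y0: "y \<in> YYm" and le0: "Y_le x y" for x y
    using y0 le0
  proof (induction "card y" arbitrary: y rule: less_induct)
    case less
    have y: "y \<in> YYm" and le: "Y_le x y" using less.prems by auto
    show ?case
    proof (cases "x = y")
      case True then show ?thesis using hid[OF y] by simp
    next
      case False
      have c2: "2 \<le> card y" and le': "Y_le x (parY y)" using Y_le_par[OF x y le False] by auto
      have p: "parY y \<in> YYm" "card (parY y) < card y" using parY_props[OF y c2] by auto
      have "mul (hs y) (hs x) = mul (mul (hs y) (hs (parY y))) (hs x)" using hra[OF y c2] by simp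
      also have "\<dots> = mul (hs y) (mul (hs (parY y)) (hs x))" using U_assoc hU[OF y] hU[OF p(1)] hU[OF x] by simp
      also have "mul (hs (parY y)) (hs x) = hs (parY y)" using less.hyps[OF p(2) p(1) le'] .
      finally show ?thesis using hra[OF y c2] by simp
    qed
  qed
  define g where "g = Gf hs"
  have gU: "\<And>y. y \<in> YYm \<Longrightarrow> g y \<in> U" unfolding g_def by (rule Gf_U[OF hU])
  have RAG: "mul (hs y) (g x) = hs y" if x0: "x \<in> YYm" and y: "y \<in> YYm" and le0: "Y_le x y" for x y
    using x0 le0
  proof (induction "card x" arbitrary: x rule: less_induct)
    case less
    have x: "x \<in> YYm" and le: "Y_le x y" using less.prems by auto
    show ?case
    proof (cases "2 \<le> card x")
      case True
      have p: "parY x \<in> YYm" "card (parY x) < card x" using parY_props[OF x \<open>2 \<le> card x\<close>] by auto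
      have le': "Y_le (parY x) y" using Y_le_trans[OF Y_le_parY[OF x \<open>2 \<le> card x\<close>] le] .
      have "mul (hs y) (g x) = mul (hs y) (mul (g (parY x)) (hs x))"
        unfolding g_def using Gf_unfold[OF x] True by simp
      also have "\<dots> = mul (mul (hs y) (g (parY x))) (hs x)" using U_assoc hU[OF y] gU[OF p(1)] hU[OF x] by simp
      also have "mul (hs y) (g (parY x)) = hs y" using less.hyps[OF p(2) p(1) le'] .
      finally show ?thesis using RAle[OF x y le] by simp
    next
      case False
      then have "g x = hs x" unfolding g_def using Gf_unfold[OF x] by simp
      then show ?thesis using RAle[OF x y le] by simp
    qed
  qed
  have Gid: "mul (g y) (g y) = g y \<and> (2 \<le> card y \<longrightarrow> idem_le mul (g y) (g (parY y)))" if y0: "y \<in> YYm" for y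
    using y0
  proof (induction "card y" arbitrary: y rule: less_induct)
    case less
    have y: "y \<in> YYm" using less.prems by auto
    show ?case
    proof (cases "2 \<le> card y")
      case True
      have p: "parY y \<in> YYm" "card (parY y) < card y" using parY_props[OF y \<open>2 \<le> card y\<close>] by auto
      define a where "a = g (parY y)"
      define b where "b = hs y"
      have aU: "a \<in> U" and bU: "b \<in> U" unfolding a_def b_def using gU[OF p(1)] hU[OF y] by auto
      have aa: "mul a a = a" unfolding a_def using less.hyps[OF p(2) p(1)] by blast
      have bb: "mul b b = b" unfolding b_def using hid[OF y] .
      have ba: "mul b a = b" unfolding a_def b_def using RAG[OF p(1) y Y_le_parY[OF y \<open>2 \<le> card y\<close>]] .
      have gy: "g y = mul a b" unfolding a_def b_def g_def using Gf_unfold[OF y] True by simp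
      have "mul (mul a b) (mul a b) = mul a (mul (mul b a) b)" using U_assoc aU bU U_mul by simp
      then have i1: "mul (g y) (g y) = g y" using gy ba bb by simp
      have "mul (mul a b) a = mul a (mul b a)" using U_assoc aU bU by simp
      then have l1: "mul (g y) a = g y" using gy ba by simp
      have "mul a (mul a b) = mul (mul a a) b" using U_assoc aU bU by simp
      then have l2: "mul a (g y) = g y" using gy aa by simp
      show ?thesis using i1 l1 l2 unfolding idem_le_def a_def by simp
    next
      case False
      then have "g y = hs y" unfolding g_def using Gf_unfold[OF y] by simp
      then show ?thesis using hid[OF y] False by simp
    qed
  qed
  have Gle: "idem_le mul (g y) (g x)" if x: "x \<in> YYm" and y0: "y \<in> YYm" and le0: "Y_le x y" for x y
    using y0 le0
  proof (induction "card y" arbitrary: y rule: less_induct)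
    case less
    have y: "y \<in> YYm" and le: "Y_le x y" using less.prems by auto
    show ?case
    proof (cases "x = y")
      case True then show ?thesis using Gid[OF y] unfolding idem_le_def by simp
    next
      case False
      have c2: "2 \<le> card y" and le': "Y_le x (parY y)" using Y_le_par[OF x y le False] by auto
      have p: "parY y \<in> YYm" "card (parY y) < card y" using parY_props[OF y c2] by auto
      have "idem_le mul (g (parY y)) (g x)" using less.hyps[OF p(2) p(1) le'] .
      moreover have "idem_le mul (g y) (g (parY y))" using Gid[OF y] c2 by blast
      ultimately show ?thesis using idem_le_trans gU y p(1) x by blast
    qed
  qed
  have Gmax: "g y \<in> Ism" if m: "Y_maximal y" for y
  proof -
    have y: "y \<in> YYm" using m unfolding Y_maximal_def by blast
    have u: "UNIV \<in> y" by (rule max_UNIV[OF m])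
    show ?thesis
    proof (cases "2 \<le> card y")
      case True
      have p: "parY y \<in> YYm" using parY_props[OF y \<open>2 \<le> card y\<close>] by auto
      have "g y = mul (g (parY y)) (hs y)" unfolding g_def using Gf_unfold[OF y] True by simp
      then show ?thesis using Ism_l gU[OF p] hI[OF y u] by simp
    next
      case False
      then have "g y = hs y" unfolding g_def using Gf_unfold[OF y] by simp
      then show ?thesis using hI[OF y u] by simp
    qed
  qed
  have Geq: "g (Y_act a y) = act a (g y)" if y: "y \<in> YYm" for a y
    unfolding g_def by (rule Gf_eqv[OF hU hid heq y])
  show ?thesis
  proof (intro exI[of _ g] conjI allI ballI impI)
    fix y assume y: "y \<in> YYm"
    show "g y \<in> idempotents U mul" unfolding idempotents_def using gU[OF y] Gid[OF y] by blast
  next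
    fix a y assume y: "y \<in> YYm" show "g (Y_act a y) = act a (g y)" by (rule Geq[OF y])
  next
    fix x y assume "x \<in> YYm" "y \<in> YYm" "Y_le x y" then show "idem_le mul (g y) (g x)" by (rule Gle)
  next
    fix y :: "'m set set" assume "Y_maximal y" then show "g y \<in> Ism" by (rule Gmax)
  qed
qed

end

context crts_act begin

lemma final_special:
  assumes c2: "card (XX :: 'm set set) \<le> 2"
  shows "\<exists>g. (\<forall>y\<in>YYm. g y \<in> idempotents U mul) \<and>
       (\<forall>a. \<forall>y\<in>YYm. g (Y_act a y) = act a (g y)) \<and>
       (\<forall>x\<in>YYm. \<forall>y\<in>YYm. Y_le x y \<longrightarrow> idem_le mul (g y) (g x)) \<and>
       (\<forall>y::'m set set. Y_maximal y \<longrightarrow> g y \<in> Ism) \<and>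
       (\<forall>y::'m set set. Y_maximal y \<longrightarrow> (\<forall>e\<in>idempotents U mul. idem_le mul e (g y) \<longrightarrow> e = g y))"
proof -
  obtain e0 where e0: "e0 \<in> U" "mul e0 e0 = e0" "e0 \<in> Ism"
      "\<forall>f\<in>U. mul f f = f \<longrightarrow> idem_le mul f e0 \<longrightarrow> f = e0"
      "\<forall>z z'::'m. rz z \<longrightarrow> rz z' \<longrightarrow> act z e0 = act z' e0"
      "\<forall>z::'m. rz z \<longrightarrow> idem_le mul e0 (act z e0)"
    using e0_obtain by metis
  have lem: "idem_le mul e0 (act m e0)" for m :: 'm
  proof (cases "range ((*) m) = (UNIV :: 'm set)")
    case True
    then have "range ((*) m) = range ((*) (1::'m))" by simp
    then have "act m e0 = act 1 e0" by (rule rep_act[OF e0(5)])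
    then show ?thesis using act1 e0(1,2) unfolding idem_le_def by simp
  next
    case False
    then have "rz m" using struct2[OF c2 art] by blast
    then show ?thesis using e0(6) by blast
  qed
  define g where "g = tb e0"
  have gU: "g y \<in> U" for y unfolding g_def tb_def using act_U e0(1) by blast
  have gid: "mul (g y) (g y) = g y" for y unfolding g_def tb_def using act_idem e0(1,2) by blast
  have gle: "idem_le mul (g y) (g x)" if x: "x \<in> YYm" and y: "y \<in> YYm" and le: "Y_le x y" for x y
  proof -
    have "topY x \<in> y" using topY(1)[OF x] le unfolding Y_le_def by blast
    then have sub: "topY x \<subseteq> topY y" using topY(2)[OF y] by blast
    define s where "s = repX (topY x)"
    define t where "t = repX (topY y)"
    have rs: "range ((*) s) = topY x" unfolding s_def by (rule repX[OF topY_XX[OF x]])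
    have rt: "range ((*) t) = topY y" unfolding t_def by (rule repX[OF topY_XX[OF y]])
    have "s \<in> range ((*) s)" by (metis mult.right_neutral rangeI)
    then have "s \<in> range ((*) t)" using rs rt sub by blast
    then obtain m where m: "s = t * m" by blast
    have "g x = act t (act m e0)" unfolding g_def tb_def using m s_def act_mult e0(1) by simp
    moreover have "g y = act t e0" unfolding g_def tb_def t_def by simp
    moreover have "idem_le mul (act t e0) (act t (act m e0))"
      by (rule act_le[OF e0(1) act_U[OF e0(1)] lem])
    ultimately show ?thesis by simp
  qed
  have gmax: "g y = e0" if m: "Y_maximal y" for y :: "'m set set"
  proof -
    have y: "y \<in> YYm" using m unfolding Y_maximal_def by blast
    show ?thesis unfolding g_def by (rule tb_max[OF e0(5) e0(1) y max_UNIV[OF m]])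
  qed
  show ?thesis
  proof (intro exI[of _ g] conjI allI ballI impI)
    fix y :: "'m set set" show "g y \<in> idempotents U mul" unfolding idempotents_def using gU gid by blast
  next
    fix a y assume y: "y \<in> YYm" show "g (Y_act a y) = act a (g y)"
      unfolding g_def by (rule tb_eqv[OF e0(5) e0(1) y])
  next
    fix x y assume "x \<in> YYm" "y \<in> YYm" "Y_le x y" then show "idem_le mul (g y) (g x)" by (rule gle)
  next
    fix y :: "'m set set" assume "Y_maximal y" then show "g y \<in> Ism" using gmax e0(3) by simp
  next
    fix y :: "'m set set" and e assume m: "Y_maximal y" and e: "e \<in> idempotents U mul" and le: "idem_le mul e (g y)"
    have "e \<in> U" "mul e e = e" using e unfolding idempotents_def by auto
    then show "e = g y" using e0(4) le gmax[OF m] by simp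
  qed
qed

end

theorem theorem2p4:
  fixes T :: "'u topology" and mul :: "'u \<Rightarrow> 'u \<Rightarrow> 'u"
    and act :: "'m::{monoid_mult, finite} \<Rightarrow> 'u \<Rightarrow> 'u"
  assumes "compact_right_topological_semigroup T mul"
    and "almost_R_trivial TYPE('m)"
    and "acts_by_continuous_endomorphisms T mul act"
  shows "\<exists>g. (\<forall>y\<in>(YY :: 'm set set set). g y \<in> idempotents (topspace T) mul) \<and>
             (\<forall>a. \<forall>y\<in>(YY :: 'm set set set). g (Y_act a y) = act a (g y)) \<and>
             (\<forall>x\<in>(YY :: 'm set set set). \<forall>y\<in>YY. Y_le x y \<longrightarrow> idem_le mul (g y) (g x)) \<and>
             (\<forall>y::'m set set. Y_maximal y \<longrightarrow> g y \<in> smallest_compact_ideal T mul) \<and>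
             (card (XX :: 'm set set) \<le> 2 \<longrightarrow>
                (\<forall>y::'m set set. Y_maximal y \<longrightarrow>
                   (\<forall>e\<in>idempotents (topspace T) mul. idem_le mul e (g y) \<longrightarrow> e = g y)))"
proof -
  interpret crts_act T mul act using assms by unfold_locales
  have sm: "smallest_compact_ideal T mul = Ism" by (rule Ism_facts(3))
  show ?thesis
  proof (cases "card (XX :: 'm set set) \<le> 2")
    case True
    from final_special[OF True] obtain g where g:
      "(\<forall>y\<in>YYm. g y \<in> idempotents U mul) \<and>
       (\<forall>a. \<forall>y\<in>YYm. g (Y_act a y) = act a (g y)) \<and>
       (\<forall>x\<in>YYm. \<forall>y\<in>YYm. Y_le x y \<longrightarrow> idem_le mul (g y) (g x)) \<and>
       (\<forall>y::'m set set. Y_maximal y \<longrightarrow> g y \<in> Ism) \<and>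
       (\<forall>y::'m set set. Y_maximal y \<longrightarrow> (\<forall>e\<in>idempotents U mul. idem_le mul e (g y) \<longrightarrow> e = g y))" by blast
    show ?thesis by (rule exI[of _ g]) (use g sm in simp)
  next
    case False
    from final_general obtain g where g:
      "(\<forall>y\<in>YYm. g y \<in> idempotents U mul) \<and>
       (\<forall>a. \<forall>y\<in>YYm. g (Y_act a y) = act a (g y)) \<and>
       (\<forall>x\<in>YYm. \<forall>y\<in>YYm. Y_le x y \<longrightarrow> idem_le mul (g y) (g x)) \<and>
       (\<forall>y::'m set set. Y_maximal y \<longrightarrow> g y \<in> Ism)" by blast
    show ?thesis by (rule exI[of _ g]) (use g sm False in simp)
  qed
qed

end
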